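(* For $i\in\{1,2\}$ let $(\mathcal B_{i,\mathbb R},\mathcal S_i,e_i,m_i)$ be as in the context, with the same constant $\kappa$. Let $\mathcal L\in L(\mathcal B_{1,\mathbb R},\mathcal B_{2,\mathbb R})$ and $\mathcal L_{\mathbb C}\in L(\mathcal B_{1,\mathbb C},\mathcal B_{2,\mathbb C})$. Assume $\mathcal L(\mathcal C_{1,\mathbb R})\subset\mathcal C_{2,\mathbb R}$ and $\Delta_{\mathbb R}:=\operatorname{diam}_{d_H}(\mathcal L(\mathcal C_{1,\mathbb R}))<\infty$. If there exists $\varepsilon\in\big(0,\frac{\kappa^2}{12\sqrt2}e^{-2\Delta_{\mathbb R}}\big)$ such that for all $\ell\in\mathcal S_2$ and all $h\in\mathcal C_{1,\mathbb R}$, \[|\ell(\mathcal L_{\mathbb C}h)-\ell(\mathcal Lh)|\le\varepsilon\,\ell(\mathcal Lh),\] then $\mathcal L_{\mathbb C}(\mathcal C_{1,\mathbb C})\subset\mathcal C_{2,\mathbb C}$ and \[\operatorname{diam}_{\delta_{\mathcal C_{2,\mathbb C}}}(\mathcal L_{\mathbb C}(\mathcal C_{1,\mathbb C}))\le8\Delta_{\mathbb R}+2\ln[3\sqrt2\kappa^{-2}]+\tfrac{\sqrt2}{3}\kappa^2e^{-2\Delta_{\mathbb R}}.\]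
   Context: Cone setting. $V$ is a real topological vector space, $\mathcal S\subset V'$ a set of linear functionals such that $\ell(x)=0$ for all $\ell\in\mathcal S$ implies $x=0$, and $C_{\mathbb R}=\{h\in V\setminus\{0\}:\ell(h)\ge0\ \forall\ell\in\mathcal S\}$. There is $e\in C_{\mathbb R}$ such that for every $h\in V$ some $\lambda\ge0$ has $\lambda e-h\in C_{\mathbb R}$. The norm is $\|h\|=\inf\{\lambda\ge0:\ell(\lambda e\pm h)\ge0\ \forall\ell\in\mathcal S\}$ and $\mathcal B_{\mathbb R}$ is the completion of $V$; $\mathcal C_{\mathbb R}=\{h\in\mathcal B_{\mathbb R}\setminus\{0\}:\ell(h)\ge0\ \forall\ell\in\mathcal S\}$. $\mathcal S_*$ is the weak-$*$ closure of the convex hull of $\{\lambda\ell:\lambda>0,\ell\in\mathcal S\}$, and there exist $m\in\mathcal S_*$ and $\kappa\in(0,1)$ with $m(e)=1$ and $m(h)\ge\kappa\|h\|$ for all $h\in\mathcal C_{\mathbb R}$. $\mathcal C'_{\mathbb R}=\{\ell\in\mathcal B'_{\mathbb R}:\ell(h)\ge0\ \forall h\in\mathcal C_{\mathbb R}\}$. The Hilbert metric on $\mathcal C_{\mathbb R}$ is $d_H(h,g)=\ln(\beta/\alpha)$, $\alpha=\sup\{\lambda>0:g-\lambda h\in\mathcal C_{\mathbb R}\}$, $\beta=\inf\{\mu>0:\mu h-g\in\mathcal C_{\mathbb R}\}$. $\mathcal B_{\mathbb C}$ is the complexification (elements $x+iy$, $x,y\in\mathcal B_{\mathbb R}$, norm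 $\|x+iy\|=\sup_\theta(\|\Re(e^{i\theta}(x+iy))\|^2+\|\Im(e^{i\theta}(x+iy))\|^2)^{1/2}$), real functionals extended complex-linearly. Complex cone $\mathcal C_{\mathbb C}=\{z(x+iy):z\in\mathbb C\setminus\{0\},x,y\in\mathcal C_{\mathbb R}\}$; dual cone $\mathcal C'_{\mathbb C}=\{\ell\in\mathcal B'_{\mathbb C}:\ell(h)\ne0\ \forall h\in\mathcal C_{\mathbb C}\}$. For $h,g\in\mathcal C_{\mathbb C}$, $E(h,g)=\{\ell(h)/\ell(g):\ell\in\mathcal C'_{\mathbb C}\}$ and $\delta_{\mathcal C}(h,g)=\ln\frac{\sup_{z\in E(h,g)}|z|}{\inf_{z\in E(h,g)}|z|}$; diameters are taken with respect to $\delta_{\mathcal C}$. Objects of the $i$-th space carry index $i$. *)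

theory Defs
  imports "HOL-Analysis.Analysis"
begin

definition coneR :: "('a::real_vector \<Rightarrow> real) set \<Rightarrow> 'a set" where
  "coneR S = {h. h \<noteq> 0 \<and> (\<forall>l\<in>S. l h \<ge> 0)}"

definition pos_comb :: "('a \<Rightarrow> real) set \<Rightarrow> ('a \<Rightarrow> real) set" where
  "pos_comb S = {(\<lambda>x. \<Sum>l\<in>F. c l * l x) | F c. finite F \<and> F \<noteq> {} \<and> F \<subseteq> S \<and> (\<forall>l\<in>F. c l > 0)}"

text \<open>S_* : weak-star closure (in the dual space; the topology on functions is the
  product topology = topology of pointwise convergence) of pos_comb S.\<close>
definition S_star :: "('a::real_normed_vector \<Rightarrow> real) set \<Rightarrow> ('a \<Rightarrow> real) set" where
  "S_star S = {l \<in> closure (pos_comb S). bounded_linear l}"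

text \<open>The standing assumptions: the type 'a is the completion B_R of the dense subspace V,
  S separates points of V, e is an order unit, the norm is the order-unit norm,
  and m, kappa as in the context.\<close>
definition cone_setting ::
  "'a::banach set \<Rightarrow> ('a \<Rightarrow> real) set \<Rightarrow> 'a \<Rightarrow> ('a \<Rightarrow> real) \<Rightarrow> real \<Rightarrow> bool" where
  "cone_setting V S e m \<kappa> \<longleftrightarrow>
     subspace V \<and> closure V = UNIV \<and>
     (\<forall>l\<in>S. bounded_linear l) \<and>
     (\<forall>x\<in>V. (\<forall>l\<in>S. l x = 0) \<longrightarrow> x = 0) \<and>
     e \<in> V \<and> e \<in> coneR S \<and>
     (\<forall>h\<in>V. \<exists>c\<ge>0. c *\<^sub>R e - h \<in> coneR S) \<and>
     (\<forall>h\<in>V. norm h = Inf {c. c \<ge> 0 \<and>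
         (\<forall>l\<in>S. l (c *\<^sub>R e + h) \<ge> 0 \<and> l (c *\<^sub>R e - h) \<ge> 0)}) \<and>
     m \<in> S_star S \<and> m e = 1 \<and> (\<forall>h\<in>coneR S. m h \<ge> \<kappa> * norm h) \<and>
     0 < \<kappa> \<and> \<kappa> < 1"

definition hilbert_alpha :: "('a::real_vector \<Rightarrow> real) set \<Rightarrow> 'a \<Rightarrow> 'a \<Rightarrow> ereal" where
  "hilbert_alpha S h g = Sup ({0} \<union> ereal ` {c. c > 0 \<and> g - c *\<^sub>R h \<in> coneR S})"

definition hilbert_beta :: "('a::real_vector \<Rightarrow> real) set \<Rightarrow> 'a \<Rightarrow> 'a \<Rightarrow> ereal" where
  "hilbert_beta S h g = Inf (ereal ` {\<mu>. \<mu> > 0 \<and> \<mu> *\<^sub>R h - g \<in> coneR S})"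

definition hilbert_dist :: "('a::real_vector \<Rightarrow> real) set \<Rightarrow> 'a \<Rightarrow> 'a \<Rightarrow> ereal" where
  "hilbert_dist S h g =
     (let a = hilbert_alpha S h g; b = hilbert_beta S h g in
      if a = 0 \<or> b = \<infinity> then \<infinity> else ereal (ln (real_of_ereal b / real_of_ereal a)))"

definition diam_H :: "('a::real_vector \<Rightarrow> real) set \<Rightarrow> 'a set \<Rightarrow> ereal" where
  "diam_H S A = Sup {hilbert_dist S h g | h g. h \<in> A \<and> g \<in> A}"

section \<open>Complexification: x + iy represented by the pair (x, y)\<close>

definition cmult :: "complex \<Rightarrow> 'a::real_vector \<times> 'a \<Rightarrow> 'a \<times> 'a" where
  "cmult z v = (Re z *\<^sub>R fst v - Im z *\<^sub>R snd v, Im z *\<^sub>R fst v + Re z *\<^sub>R snd v)"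

definition cnorm :: "'a::real_normed_vector \<times> 'a \<Rightarrow> real" where
  "cnorm v = (SUP \<theta>. sqrt ((norm (fst (cmult (cis \<theta>) v)))\<^sup>2 + (norm (snd (cmult (cis \<theta>) v)))\<^sup>2))"

definition cbounded_linear ::
  "('a::real_normed_vector \<times> 'a \<Rightarrow> 'b::real_normed_vector \<times> 'b) \<Rightarrow> bool" where
  "cbounded_linear T \<longleftrightarrow>
     (\<forall>u v. T (u + v) = T u + T v) \<and> (\<forall>z v. T (cmult z v) = cmult z (T v)) \<and>
     (\<exists>K. \<forall>v. cnorm (T v) \<le> K * cnorm v)"

definition cbounded_functional :: "('a::real_normed_vector \<times> 'a \<Rightarrow> complex) \<Rightarrow> bool" where
  "cbounded_functional f \<longleftrightarrow>
     (\<forall>u v. f (u + v) = f u + f v) \<and> (\<forall>z v. f (cmult z v) = z * f v) \<and>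
     (\<exists>K. \<forall>v. cmod (f v) \<le> K * cnorm v)"

definition cext :: "('a \<Rightarrow> real) \<Rightarrow> 'a \<times> 'a \<Rightarrow> complex" where
  "cext l v = Complex (l (fst v)) (l (snd v))"

definition coneC :: "('a::real_vector \<Rightarrow> real) set \<Rightarrow> ('a \<times> 'a) set" where
  "coneC S = {cmult z (x, y) | z x y. z \<noteq> 0 \<and> x \<in> coneR S \<and> y \<in> coneR S}"

definition dual_coneC :: "('a::real_normed_vector \<Rightarrow> real) set \<Rightarrow> ('a \<times> 'a \<Rightarrow> complex) set" where
  "dual_coneC S = {f. cbounded_functional f \<and> (\<forall>h\<in>coneC S. f h \<noteq> 0)}"

definition E_set :: "('a::real_normed_vector \<Rightarrow> real) set \<Rightarrow> 'a \<times> 'a \<Rightarrow> 'a \<times> 'a \<Rightarrow> complex set" where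
  "E_set S h g = {f h / f g | f. f \<in> dual_coneC S}"

definition delta_C :: "('a::real_normed_vector \<Rightarrow> real) set \<Rightarrow> 'a \<times> 'a \<Rightarrow> 'a \<times> 'a \<Rightarrow> ereal" where
  "delta_C S h g =
     (let s = Sup ((\<lambda>z. ereal (cmod z)) ` E_set S h g);
          i = Inf ((\<lambda>z. ereal (cmod z)) ` E_set S h g) in
      if E_set S h g = {} \<or> s = \<infinity> \<or> i = 0 then \<infinity>
      else ereal (ln (real_of_ereal s / real_of_ereal i)))"

definition diam_C :: "('a::real_normed_vector \<Rightarrow> real) set \<Rightarrow> ('a \<times> 'a) set \<Rightarrow> ereal" where
  "diam_C S A = Sup {delta_C S h g | h g. h \<in> A \<and> g \<in> A}"

end

theory Submission
  imports Defs
begin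


definition Cbar :: "('a::real_vector \<Rightarrow> real) set \<Rightarrow> 'a set" where
  "Cbar S = {h. \<forall>l\<in>S. l h \<ge> 0}"

lemma bl:
  assumes "bounded_linear l"
  shows "l (x + y) = l x + l y" "l (x - y) = l x - l y" "l (- x) = - l x" "l 0 = 0"
    "l (r *\<^sub>R x) = r *\<^sub>R l x"
  using bounded_linear.linear[OF assms]
  by (auto simp: linear_add linear_diff linear_neg linear_0 linear_scale)

lemma cs_facts:
  assumes "cone_setting V S e m \<kappa>"
  shows "\<forall>l\<in>S. bounded_linear l" "bounded_linear m" "\<forall>h\<in>coneR S. \<kappa> * norm h \<le> m h"
    "0 < \<kappa>" "\<kappa> < 1" "e \<in> coneR S"
  using assms unfolding cone_setting_def S_star_def by auto

lemma cs_pointed: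
  assumes cs: "cone_setting V S e m \<kappa>" and z: "\<forall>l\<in>S. l h = 0"
  shows "h = 0"
proof (rule ccontr)
  assume h: "h \<noteq> 0"
  note F = cs_facts[OF cs]
  have h1: "h \<in> coneR S" using h z by (auto simp: coneR_def)
  have h2: "-h \<in> coneR S" using h z F(1) by (auto simp: coneR_def bl)
  have "\<kappa> * norm h \<le> m h" using F(3) h1 by auto
  moreover have "\<kappa> * norm h \<le> m (-h)" using F(3) h2 by auto
  moreover have "m (-h) = - m h" using F(2) by (simp add: bl)
  moreover have "0 < \<kappa> * norm h" using F(4) h by simp
  ultimately show False by linarith
qed

lemma coneR_of_bound:
  assumes cs: "cone_setting V S e m \<kappa>" and a: "a \<in> coneR S" and g: "0 < \<gamma>"
    and b: "\<forall>l\<in>S. \<gamma> * l a \<le> l p"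
  shows "p \<in> coneR S"
proof -
  note F = cs_facts[OF cs]
  have la: "\<forall>l\<in>S. 0 \<le> l a" using a by (auto simp: coneR_def)
  have lp: "\<forall>l\<in>S. 0 \<le> l p" using la b g by (meson order_trans mult_nonneg_nonneg less_imp_le)
  have "p \<noteq> 0"
  proof
    assume "p = 0"
    then have "\<forall>l\<in>S. l p = 0" using F(1) by (simp add: bl)
    then have "\<forall>l\<in>S. l a = 0" using b la g by (smt (verit) mult_pos_pos)
    then have "a = 0" using cs_pointed[OF cs] by blast
    then show False using a by (simp add: coneR_def)
  qed
  then show ?thesis using lp by (simp add: coneR_def)
qed

lemma coneR_add_bar:
  assumes cs: "cone_setting V S e m \<kappa>" and "x \<in> coneR S" "y \<in> Cbar S"
  shows "x + y \<in> coneR S"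
proof (rule coneR_of_bound[OF cs assms(2), of 1])
  show "\<forall>l\<in>S. 1 * l x \<le> l (x + y)" using assms cs_facts(1)[OF cs]
    by (auto simp: Cbar_def bl)
qed simp

lemma coneC_intro:
  fixes P Q :: "'a::real_vector"
  assumes cd: "(c::real) \<noteq> 0 \<or> d \<noteq> 0"
    and p: "c *\<^sub>R P - d *\<^sub>R Q \<in> coneR S" and q: "d *\<^sub>R P + c *\<^sub>R Q \<in> coneR S"
  shows "(P, Q) \<in> coneC S"
proof -
  define n where "n = c*c + d*d"
  have n: "n > 0" using cd unfolding n_def by (simp add: sum_squares_gt_zero_iff)
  define z where "z = Complex (c/n) (-d/n)"
  have z: "z \<noteq> 0" using n cd by (auto simp: z_def complex_eq_iff)
  have e1: "(c/n) *\<^sub>R (c *\<^sub>R P - d *\<^sub>R Q) - (-d/n) *\<^sub>R (d *\<^sub>R P + c *\<^sub>R Q) = ((c*c + d*d)/n) *\<^sub>R P"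
    by (simp add: algebra_simps add_divide_distrib)
  have e2: "(-d/n) *\<^sub>R (c *\<^sub>R P - d *\<^sub>R Q) + (c/n) *\<^sub>R (d *\<^sub>R P + c *\<^sub>R Q) = ((c*c + d*d)/n) *\<^sub>R Q"
    by (simp add: algebra_simps add_divide_distrib)
  have "cmult z (c *\<^sub>R P - d *\<^sub>R Q, d *\<^sub>R P + c *\<^sub>R Q) = (P, Q)"
    using e1 e2 n by (simp add: cmult_def z_def n_def[symmetric])
  then show ?thesis unfolding coneC_def using z p q by force
qed

lemma cmult_cmult: "cmult z (cmult w v) = cmult (z * w) v"
  by (simp add: cmult_def algebra_simps)

lemma cmult_add: "cmult z (u + v) = cmult z u + cmult z v"
  by (simp add: cmult_def algebra_simps)

lemma cmult_one: "cmult 1 v = v"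
  by (simp add: cmult_def)

lemma cmult_real: "cmult (complex_of_real r) (P, 0) = (r *\<^sub>R P, 0)"
  by (simp add: cmult_def)

lemma pair_split: "(P, Q) = (P, 0) + cmult \<i> (Q, 0)"
  by (simp add: cmult_def)

lemma cf_simps:
  assumes "cbounded_functional f"
  shows "f (P, Q) = f (P, 0) + \<i> * f (Q, 0)"
    "f (P + P', 0) = f (P, 0) + f (P', 0)"
    "f (r *\<^sub>R P, 0) = complex_of_real r * f (P, 0)"
    "f (u + v) = f u + f v"
    "f (cmult z v) = z * f v"
proof -
  have ad: "\<And>u v. f (u + v) = f u + f v" and sc: "\<And>z v. f (cmult z v) = z * f v"
    using assms by (auto simp: cbounded_functional_def)
  show "f (P, Q) = f (P, 0) + \<i> * f (Q, 0)"
    by (subst pair_split) (simp only: ad sc)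
  show "f (P + P', 0) = f (P, 0) + f (P', 0)" using ad[of "(P,0)" "(P',0)"] by simp
  show "f (r *\<^sub>R P, 0) = complex_of_real r * f (P, 0)" using sc[of "complex_of_real r" "(P,0)"]
    by (simp add: cmult_real)
  show "f (u + v) = f u + f v" by (rule ad)
  show "f (cmult z v) = z * f v" by (rule sc)
qed

lemma cf_diff:
  assumes "cbounded_functional f"
  shows "f (P - P', 0) = f (P, 0) - f (P', 0)"
proof -
  have "f (P, 0) = f ((P - P') + P', 0)" by simp
  also have "\<dots> = f (P - P', 0) + f (P', 0)" by (rule cf_simps(2)[OF assms])
  finally show ?thesis by simp
qed

lemma cf_zero:
  assumes "cbounded_functional f" shows "f (0, 0) = 0"
  using cf_simps(3)[OF assms, of 0 0] by simp

lemma LC_split: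
  assumes "cbounded_linear LC"
  shows "LC (x, y) = LC (x, 0) + cmult \<i> (LC (y, 0))" "LC (cmult z v) = cmult z (LC v)"
  using assms pair_split[of x y] unfolding cbounded_linear_def by metis+

lemma coneC_cmult:
  assumes "v \<in> coneC S" "z \<noteq> 0" shows "cmult z v \<in> coneC S"
  using assms unfolding coneC_def by (auto simp: cmult_cmult) (metis mult_eq_0_iff)

lemma coneR_coneC:
  assumes "a \<in> coneR S" shows "(a, 0) \<in> coneC S"
  using coneC_intro[of 1 1 a 0 S] assms by simp

lemma dual_nz:
  assumes "f \<in> dual_coneC S" "v \<in> coneC S" shows "f v \<noteq> 0"
  using assms by (auto simp: dual_coneC_def)

lemma cext_simps:
  assumes "bounded_linear l"
  shows "cext l (u + v) = cext l u + cext l v" "cext l (cmult z v) = z * cext l v"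
    "cext l (P, Q) = Complex (l P) (l Q)"
  using assms by (auto simp: cext_def cmult_def bl complex_eq_iff algebra_simps)

lemma hilbert_bounds:
  assumes cs: "cone_setting V S e m \<kappa>" and a: "a \<in> coneR S" and b: "b \<in> coneR S"
    and hd: "hilbert_dist S a b \<le> ereal D"
  shows "\<exists>lo hi. 0 < lo \<and> lo \<le> hi \<and> hi \<le> exp D * lo \<and> b - lo *\<^sub>R a \<in> Cbar S \<and> hi *\<^sub>R a - b \<in> Cbar S"
proof -
  note F = cs_facts[OF cs]
  define A where "A = {c. c > 0 \<and> b - c *\<^sub>R a \<in> coneR S}"
  define B where "B = {\<mu>. \<mu> > 0 \<and> \<mu> *\<^sub>R a - b \<in> coneR S}"
  define \<alpha> where "\<alpha> = hilbert_alpha S a b"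
  define \<beta> where "\<beta> = hilbert_beta S a b"
  have \<alpha>def: "\<alpha> = Sup ({0} \<union> ereal ` A)" unfolding \<alpha>_def A_def hilbert_alpha_def by simp
  have \<beta>def: "\<beta> = Inf (ereal ` B)" unfolding \<beta>_def B_def hilbert_beta_def by simp
  have fin: "\<not> (\<alpha> = 0 \<or> \<beta> = \<infinity>)"
  proof
    assume "\<alpha> = 0 \<or> \<beta> = \<infinity>"
    then have "hilbert_dist S a b = \<infinity>" unfolding hilbert_dist_def \<alpha>_def \<beta>_def by (auto simp: Let_def)
    then show False using hd by simp
  qed
  have hdv: "hilbert_dist S a b = ereal (ln (real_of_ereal \<beta> / real_of_ereal \<alpha>))"
    using fin unfolding hilbert_dist_def \<alpha>_def \<beta>_def by (auto simp: Let_def)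
  have ma: "m a > 0" using F(3,4) a by (smt (verit, best) coneR_def mem_Collect_eq mult_pos_pos zero_less_norm_iff)
  have mb: "m b > 0" using F(3,4) b by (smt (verit, best) coneR_def mem_Collect_eq mult_pos_pos zero_less_norm_iff)
  have mnn: "\<And>h. h \<in> coneR S \<Longrightarrow> m h \<ge> 0" using F(3,4) by (smt (verit) mult_nonneg_nonneg norm_ge_zero)
  have Aub: "c \<le> m b / m a" if "c \<in> A" for c
  proof -
    have "m (b - c *\<^sub>R a) \<ge> 0" using mnn that by (auto simp: A_def)
    then have "c * m a \<le> m b" by (simp add: bl[OF F(2)])
    then show ?thesis using ma by (simp add: field_simps)
  qed
  have Blb: "c \<ge> m b / m a" if "c \<in> B" for c
  proof -
    have "m (c *\<^sub>R a - b) \<ge> 0" using mnn that by (auto simp: B_def)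
    then have "c * m a \<ge> m b" by (simp add: bl[OF F(2)])
    then show ?thesis using ma by (simp add: field_simps)
  qed
  have \<alpha>ub: "\<alpha> \<le> ereal (m b / m a)" unfolding \<alpha>def
    using Aub ma mb by (auto intro!: Sup_least)
  have \<alpha>nn: "\<alpha> \<ge> 0" unfolding \<alpha>def by (auto intro: Sup_upper)
  obtain ar where ar: "\<alpha> = ereal ar" "ar > 0" using \<alpha>ub \<alpha>nn fin
    by (cases \<alpha>) auto
  have \<beta>lb: "\<beta> \<ge> ereal (m b / m a)" unfolding \<beta>def using Blb by (auto intro!: Inf_greatest)
  obtain br where br: "\<beta> = ereal br" "br \<ge> m b / m a" using \<beta>lb fin by (cases \<beta>) auto
  have arbr: "ar \<le> br" using ar br \<alpha>ub by auto
  have Bne: "B \<noteq> {}" using fin \<beta>def by (auto simp: top_ereal_def)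
  have low: "b - ar *\<^sub>R a \<in> Cbar S" unfolding Cbar_def
  proof (safe)
    fix l assume l: "l \<in> S"
    have la: "l a \<ge> 0" "l b \<ge> 0" using a b l by (auto simp: coneR_def)
    show "0 \<le> l (b - ar *\<^sub>R a)"
    proof (cases "l a = 0")
      case True then show ?thesis using la  by (simp add: bl[OF F(1)[rule_format, OF l]])
    next
      case False
      then have lap: "l a > 0" using la by simp
      have "c \<le> l b / l a" if "c \<in> A" for c
      proof -
        have "l (b - c *\<^sub>R a) \<ge> 0" using that l by (auto simp: A_def coneR_def)
        then have "c * l a \<le> l b" by (simp add: bl[OF F(1)[rule_format, OF l]])
        then show ?thesis using lap by (simp add: field_simps)
      qed
      then have "\<alpha> \<le> ereal (l b / l a)" unfolding \<alpha>def using la lap by (auto intro!: Sup_least)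
      then have "ar \<le> l b / l a" using ar by simp
      then show ?thesis using lap  by (simp add: bl[OF F(1)[rule_format, OF l]] field_simps)
    qed
  qed
  have up: "br *\<^sub>R a - b \<in> Cbar S" unfolding Cbar_def
  proof (safe)
    fix l assume l: "l \<in> S"
    have la: "l a \<ge> 0" "l b \<ge> 0" using a b l by (auto simp: coneR_def)
    show "0 \<le> l (br *\<^sub>R a - b)"
    proof (cases "l a = 0")
      case True
      obtain c where c: "c \<in> B" using Bne by auto
      have "l (c *\<^sub>R a - b) \<ge> 0" using c l by (auto simp: B_def coneR_def)
      then show ?thesis using True la  by (simp add: bl[OF F(1)[rule_format, OF l]])
    next
      case False
      then have lap: "l a > 0" using la by simp
      have "c \<ge> l b / l a" if "c \<in> B" for c
      proof -
        have "l (c *\<^sub>R a - b) \<ge> 0" using that l by (auto simp: B_def coneR_def)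
        then have "c * l a \<ge> l b" by (simp add: bl[OF F(1)[rule_format, OF l]])
        then show ?thesis using lap by (simp add: field_simps)
      qed
      then have "\<beta> \<ge> ereal (l b / l a)" unfolding \<beta>def by (auto intro!: Inf_greatest)
      then have "br \<ge> l b / l a" using br by simp
      then show ?thesis using lap  by (simp add: bl[OF F(1)[rule_format, OF l]] field_simps)
    qed
  qed
  have "ln (br / ar) \<le> D" using hd hdv ar br by simp
  then have "br / ar \<le> exp D" using ar arbr by (metis exp_ln divide_pos_pos exp_le_cancel_iff less_le_trans)
  then have "br \<le> exp D * ar" using ar by (simp add: field_simps)
  then show ?thesis using ar arbr low up by blast
qed


lemma Cbar_coneR: "x \<in> Cbar S \<Longrightarrow> x \<noteq> 0 \<Longrightarrow> x \<in> coneR S"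
  by (simp add: Cbar_def coneR_def)

lemma coneR_Cbar: "x \<in> coneR S \<Longrightarrow> x \<in> Cbar S"
  by (simp add: Cbar_def coneR_def)

lemma poscomb_coneR:
  assumes cs: "cone_setting V S e m \<kappa>" and p: "p \<in> coneR S" and q: "q \<in> Cbar S"
    and s: "s > 0" and s': "s' \<ge> 0"
  shows "s *\<^sub>R p + s' *\<^sub>R q \<in> coneR S"
proof (rule coneR_of_bound[OF cs p s])
  note F = cs_facts[OF cs]
  show "\<forall>l\<in>S. s * l p \<le> l (s *\<^sub>R p + s' *\<^sub>R q)"
  proof
    fix l assume l: "l \<in> S"
    have "l q \<ge> 0" using q l by (auto simp: Cbar_def)
    then show "s * l p \<le> l (s *\<^sub>R p + s' *\<^sub>R q)" using s'
      by (simp add: bl[OF F(1)[rule_format, OF l]])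
  qed
qed

lemma pq_nz:
  assumes cs: "cone_setting V S e m \<kappa>" and f: "f \<in> dual_coneC S"
    and p: "p \<in> coneR S" and q: "q \<in> coneR S" and nu: "Re \<nu> > 0"
  shows "f (p, 0) + \<nu> * f (q, 0) \<noteq> 0"
proof -
  have cf: "cbounded_functional f" using f by (simp add: dual_coneC_def)
  define n1 where "n1 = Re \<nu>"
  define n2 where "n2 = Im \<nu>"
  have qb: "q \<in> Cbar S" using q by (rule coneR_Cbar)
  obtain t where t: "t > 0" "n1 - t * n2 \<ge> 0" "t * n1 + n2 \<ge> 0"
  proof (cases "n2 \<ge> 0")
    case True
    have "n1 - (n1 / (n2 + 1)) * n2 \<ge> 0" using True nu n1_def
      by (simp add: field_simps)
    moreover have "(n1 / (n2 + 1)) * n1 + n2 \<ge> 0" using True nu n1_def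
      by (simp add: field_simps)
    moreover have "n1 / (n2 + 1) > 0" using True nu n1_def by simp
    ultimately show ?thesis using that by blast
  next
    case False
    have "n1 - (- n2 / n1) * n2 \<ge> 0" using False nu n1_def
      by (simp add: field_simps)
    moreover have "(- n2 / n1) * n1 + n2 \<ge> 0" using False nu n1_def
      by (simp add: field_simps)
    moreover have "- n2 / n1 > 0" using False nu n1_def by (simp add: field_simps)
    ultimately show ?thesis using that by blast
  qed
  define P where "P = p + n1 *\<^sub>R q"
  define Q where "Q = n2 *\<^sub>R q"
  have e1: "1 *\<^sub>R P - t *\<^sub>R Q = 1 *\<^sub>R p + (n1 - t * n2) *\<^sub>R q"
    by (simp add: P_def Q_def algebra_simps)
  have e2: "t *\<^sub>R P + 1 *\<^sub>R Q = t *\<^sub>R p + (t * n1 + n2) *\<^sub>R q"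
    by (simp add: P_def Q_def algebra_simps)
  have m1: "1 *\<^sub>R P - t *\<^sub>R Q \<in> coneR S" unfolding e1
    by (rule poscomb_coneR[OF cs p qb]) (use t in auto)
  have m2: "t *\<^sub>R P + 1 *\<^sub>R Q \<in> coneR S" unfolding e2
    by (rule poscomb_coneR[OF cs p qb]) (use t in auto)
  have "(P, Q) \<in> coneC S" by (rule coneC_intro[OF _ m1 m2]) simp
  then have "f (P, Q) \<noteq> 0" by (rule dual_nz[OF f])
  moreover have "f (P, Q) = f (p, 0) + \<nu> * f (q, 0)"
  proof -
    have h1: "f (P, Q) = f (P, 0) + \<i> * f (Q, 0)" by (rule cf_simps(1)[OF cf])
    have h2: "f (P, 0) = f (p, 0) + complex_of_real n1 * f (q, 0)"
      unfolding P_def cf_simps(2)[OF cf] cf_simps(3)[OF cf] ..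
    have h3: "f (Q, 0) = complex_of_real n2 * f (q, 0)"
      unfolding Q_def cf_simps(3)[OF cf] ..
    have h4: "\<nu> = complex_of_real n1 + \<i> * complex_of_real n2"
      by (simp add: n1_def n2_def complex_eq_iff)
    show ?thesis unfolding h1 h2 h3 h4 by (simp add: algebra_simps)
  qed
  ultimately show ?thesis by simp
qed


lemma harnack:
  assumes cs: "cone_setting V S e m \<kappa>" and f: "f \<in> dual_coneC S"
    and a: "a \<in> coneR S" and pb: "b - lo *\<^sub>R a \<in> Cbar S" and qb: "hi *\<^sub>R a - b \<in> Cbar S"
    and lo: "0 < lo" "lo \<le> hi"
  shows "cmod (f (b, 0) / f (a, 0) - complex_of_real ((lo + hi) / 2)) \<le> (hi - lo) / 2"
proof -
  note F = cs_facts[OF cs]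
  have cf: "cbounded_functional f" using f by (simp add: dual_coneC_def)
  define p where "p = b - lo *\<^sub>R a"
  define q where "q = hi *\<^sub>R a - b"
  have fa: "f (a, 0) \<noteq> 0" using dual_nz[OF f coneR_coneC[OF a]] .
  define w where "w = f (b, 0) / f (a, 0)"
  have fb: "f (b, 0) = w * f (a, 0)" using fa by (simp add: w_def)
  have pq: "p + q = (hi - lo) *\<^sub>R a" by (simp add: p_def q_def algebra_simps)
  have bb: "(hi - lo) *\<^sub>R b = hi *\<^sub>R p + lo *\<^sub>R q" by (simp add: p_def q_def algebra_simps)
  have Fa: "complex_of_real (hi - lo) * f (a, 0) = f (p, 0) + f (q, 0)"
    using arg_cong[OF pq, of "\<lambda>v. f (v, 0)"] by (simp add: cf_simps(2,3)[OF cf])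
  have Fb: "complex_of_real (hi - lo) * f (b, 0) = complex_of_real hi * f (p, 0) + complex_of_real lo * f (q, 0)"
    using arg_cong[OF bb, of "\<lambda>v. f (v, 0)"] by (simp add: cf_simps(2,3)[OF cf])
  show ?thesis
  proof (cases "lo = hi")
    case True
    have "p + q = 0" using pq True by simp
    then have qp: "q = - p" by (simp add: eq_neg_iff_add_eq_0 add.commute)
    have "\<forall>l\<in>S. l p = 0"
    proof
      fix l assume l: "l \<in> S"
      have "l p \<ge> 0" "l q \<ge> 0" using pb qb l unfolding p_def[symmetric] q_def[symmetric] Cbar_def by auto
      moreover have "l q = - l p" using qp by (simp add: bl[OF F(1)[rule_format, OF l]])
      ultimately show "l p = 0" by linarith
    qed
    then have "p = 0" by (rule cs_pointed[OF cs])
    then have "b = lo *\<^sub>R a" by (simp add: p_def)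
    then have "w = complex_of_real lo" using fa by (simp add: w_def cf_simps(2,3)[OF cf])
    then show ?thesis using True by (simp add: w_def)
  next
    case False
    then have lh: "lo < hi" using lo by simp
    show ?thesis
    proof (rule ccontr)
      assume "\<not> ?thesis"
      then have big: "cmod (w - complex_of_real ((lo + hi) / 2)) > (hi - lo) / 2" by (simp add: w_def)
      have big2: "(Re w - (lo + hi) / 2)^2 + (Im w)^2 > ((hi - lo) / 2)^2"
      proof -
        have "((hi - lo) / 2)^2 < (cmod (w - complex_of_real ((lo + hi) / 2)))^2"
          using big lh by (intro power_strict_mono) auto
        then show ?thesis by (simp add: cmod_def)
      qed
      have D: "(lo - Re w) * (hi - Re w) + Im w * Im w > 0"
        using big2 by (simp add: power2_eq_square algebra_simps) (simp add: field_simps)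
      have hw: "complex_of_real hi - w \<noteq> 0"
      proof
        assume "complex_of_real hi - w = 0"
        then have "Re w = hi" "Im w = 0" by (auto simp: complex_eq_iff)
        then show False using D by simp
      qed
      define \<nu> where "\<nu> = (complex_of_real lo - w) / (complex_of_real hi - w)"
      have nu: "Re \<nu> > 0"
      proof -
        have den: "(Re (complex_of_real hi - w))^2 + (Im (complex_of_real hi - w))^2 > 0"
          using hw by (simp add: complex_eq_iff sum_power2_gt_zero_iff)
        show ?thesis unfolding \<nu>_def Re_divide using D den
          by (simp add: algebra_simps)
      qed
      have key: "f (p, 0) + \<nu> * f (q, 0) = 0"
      proof -
        have "(complex_of_real hi - w) * (f (p, 0) + \<nu> * f (q, 0))
              = complex_of_real hi * f (p, 0) + complex_of_real lo * f (q, 0) - w * (f (p, 0) + f (q, 0))"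
          using hw by (simp add: \<nu>_def field_simps)
        also have "\<dots> = complex_of_real (hi - lo) * (f (b, 0) - w * f (a, 0))"
          using Fa Fb by (simp add: algebra_simps)
        also have "\<dots> = 0" using fb by simp
        finally show ?thesis using hw by simp
      qed
      have nu0: "\<nu> \<noteq> 0" using nu by auto
      show False
      proof (cases "p = 0")
        case True
        then have "f (q, 0) = complex_of_real (hi - lo) * f (a, 0)" using Fa by (simp add: cf_simps(2,3)[OF cf] cf_zero[OF cf])
        then have "f (q, 0) \<noteq> 0" using fa lh by simp
        moreover have "f (p, 0) = 0" using True cf_simps(3)[OF cf, of 0 0] by simp
        ultimately show False using key nu0 by simp
      next
        case pnz: False
        show False
        proof (cases "q = 0")
          case True
          then have "f (p, 0) = complex_of_real (hi - lo) * f (a, 0)" using Fa by (simp add: cf_simps(2,3)[OF cf] cf_zero[OF cf])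
          then have "f (p, 0) \<noteq> 0" using fa lh by simp
          moreover have "f (q, 0) = 0" using True cf_simps(3)[OF cf, of 0 0] by simp
          ultimately show False using key by simp
        next
          case False
          have "p \<in> coneR S" using pb pnz by (simp add: p_def Cbar_coneR)
          moreover have "q \<in> coneR S" using qb False by (simp add: q_def Cbar_coneR)
          ultimately show False using pq_nz[OF cs f _ _ nu] key by blast
        qed
      qed
    qed
  qed
qed



lemma ball_lemma:
  assumes cs: "cone_setting V S e m \<kappa>" and f: "f \<in> dual_coneC S" and a: "a \<in> coneR S"
    and eps: "\<epsilon> > 0"
    and close: "\<forall>l\<in>S. cmod (cext l X - complex_of_real (l a)) \<le> \<epsilon> * l a"
  shows "cmod (f X - f (a, 0)) \<le> 3 * \<epsilon> * cmod (f (a, 0))"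
proof -
  note F = cs_facts[OF cs]
  have cf: "cbounded_functional f" using f by (simp add: dual_coneC_def)
  define w where "w = X - (a, 0)"
  have Xw: "X = (a, 0) + w" by (simp add: w_def)
  have fX: "f X - f (a, 0) = f w" unfolding Xw cf_simps(4)[OF cf] by simp
  have mem: "(a, 0) + cmult \<zeta> w \<in> coneC S" if z: "cmod \<zeta> * \<epsilon> \<le> 1/3" for \<zeta>
  proof -
    obtain P Q where PQ: "(a, 0) + cmult \<zeta> w = (P, Q)" by (metis surj_pair)
    have bnd: "1/3 * l a \<le> l (1 *\<^sub>R P - 1 *\<^sub>R Q) \<and> 1/3 * l a \<le> l (1 *\<^sub>R P + 1 *\<^sub>R Q)" if l: "l \<in> S" for l
    proof -
      have bll: "bounded_linear l" using F(1) l by auto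
      have la: "l a \<ge> 0" using a l by (simp add: coneR_def)
      have cw: "cext l X = complex_of_real (l a) + cext l w"
        unfolding Xw cext_simps(1)[OF bll] cext_simps(3)[OF bll] by (simp add: bl[OF bll] complex_eq_iff)
      have c1: "cmod (cext l X - complex_of_real (l a)) \<le> \<epsilon> * l a" using close l by blast
      have c2: "cext l X - complex_of_real (l a) = cext l w" using cw by simp
      have cwb: "cmod (cext l w) \<le> \<epsilon> * l a" using c1 unfolding c2 .
      have "cext l (P, Q) = complex_of_real (l a) + \<zeta> * cext l w"
        unfolding PQ[symmetric] cext_simps(1,2)[OF bll] cext_simps(3)[OF bll] by (simp add: bl[OF bll] complex_eq_iff)
      then have lPQ: "l P = l a + Re (\<zeta> * cext l w)" "l Q = Im (\<zeta> * cext l w)"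
        by (simp_all add: cext_simps(3)[OF bll] complex_eq_iff)
      have "cmod (\<zeta> * cext l w) \<le> cmod \<zeta> * (\<epsilon> * l a)" unfolding norm_mult
        by (rule mult_left_mono[OF cwb]) simp
      also have "\<dots> = (cmod \<zeta> * \<epsilon>) * l a" by simp
      also have "\<dots> \<le> 1/3 * l a" by (rule mult_right_mono[OF z la])
      finally have zb: "cmod (\<zeta> * cext l w) \<le> 1/3 * l a" .
      have r1: "\<bar>Re (\<zeta> * cext l w)\<bar> \<le> cmod (\<zeta> * cext l w)" by (rule abs_Re_le_cmod)
      have r2: "\<bar>Im (\<zeta> * cext l w)\<bar> \<le> cmod (\<zeta> * cext l w)" by (rule abs_Im_le_cmod)
      show ?thesis using lPQ zb r1 r2 la by (simp add: bl[OF bll]) linarith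
    qed
    have "1 *\<^sub>R P - 1 *\<^sub>R Q \<in> coneR S"
      by (rule coneR_of_bound[OF cs a, of "1/3"]) (use bnd in auto)
    moreover have "1 *\<^sub>R P + 1 *\<^sub>R Q \<in> coneR S"
      by (rule coneR_of_bound[OF cs a, of "1/3"]) (use bnd in auto)
    ultimately have "(P, Q) \<in> coneC S" by (intro coneC_intro[of 1 1]) auto
    then show ?thesis using PQ by simp
  qed
  have fa: "f (a, 0) \<noteq> 0" using dual_nz[OF f coneR_coneC[OF a]] .
  show ?thesis
  proof (rule ccontr)
    assume "\<not> ?thesis"
    then have big: "cmod (f w) > 3 * \<epsilon> * cmod (f (a, 0))" using fX by simp
    then have fw: "f w \<noteq> 0" using eps by (smt (verit) mult_nonneg_nonneg norm_ge_zero norm_zero)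
    define \<zeta> where "\<zeta> = - f (a, 0) / f w"
    have "cmod \<zeta> * \<epsilon> = cmod (f (a, 0)) * \<epsilon> / cmod (f w)" by (simp add: \<zeta>_def norm_divide)
    also have "\<dots> \<le> 1/3" using big fw by (simp add: field_simps)
    finally have "(a, 0) + cmult \<zeta> w \<in> coneC S" by (rule mem)
    then have "f ((a, 0) + cmult \<zeta> w) \<noteq> 0" by (rule dual_nz[OF f])
    moreover have "f ((a, 0) + cmult \<zeta> w) = 0"
      unfolding cf_simps(4,5)[OF cf] using fw by (simp add: \<zeta>_def)
    ultimately show False by simp
  qed
qed


lemma ineq_aux:
  fixes lo hi E :: real
  assumes lo: "0 < lo" "lo \<le> hi" "hi \<le> E * lo" and E: "1 \<le> E"
  shows "(1 + lo) * (1 + hi) \<le> (1 + E) * (1 + lo * hi)" "1 + hi \<le> E * (1 + lo)"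
proof -
  have "lo + hi \<le> E * (1 + lo * hi)"
  proof (cases "hi \<le> 1 \<or> 1 \<le> lo")
    case True
    then have "(1 - lo) * (1 - hi) \<ge> 0" using lo
      by (metis diff_ge_0_iff_ge mult_nonneg_nonneg mult_nonpos_nonpos order_trans diff_le_0_iff_le)
    then have "lo + hi \<le> 1 + lo * hi" by (simp add: algebra_simps)
    also have "\<dots> \<le> E * (1 + lo * hi)"
    proof -
      have "0 \<le> 1 + lo * hi" using lo by simp
      then show ?thesis using E by (metis mult_1 mult_right_mono)
    qed
    finally show ?thesis .
  next
    case False
    then have "1 < hi" "lo < 1" by auto
    have "1 \<le> E * lo" using \<open>1 < hi\<close> lo by linarith
    then have "hi \<le> E * lo * hi" using \<open>1 < hi\<close> by (simp add: mult_le_cancel_right1)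
    then have "lo + hi \<le> 1 + E * lo * hi" using \<open>lo < 1\<close> by linarith
    also have "\<dots> \<le> E * (1 + lo * hi)" using E by (simp add: algebra_simps)
    finally show ?thesis .
  qed
  then show "(1 + lo) * (1 + hi) \<le> (1 + E) * (1 + lo * hi)" using E lo
    by (simp add: algebra_simps)
  show "1 + hi \<le> E * (1 + lo)" using lo E by (simp add: algebra_simps)
qed

lemma ineq_pq:
  fixes A B lo hi E \<epsilon> r1 r2 :: real
  assumes A: "0 \<le> A" "lo * A \<le> B" "B \<le> hi * A"
    and lo: "0 < lo" "lo \<le> hi" "hi \<le> E * lo" and E: "1 \<le> E"
    and eps: "0 < \<epsilon>" "16 * \<epsilon> * E^2 < 1"
    and r: "\<bar>r1\<bar> \<le> \<epsilon> * (A + B)" "\<bar>r2\<bar> \<le> \<epsilon> * (A + B)"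
  shows "A / 2 \<le> (1 + 2 * hi + lo * hi) * (A + r1) - (1 - lo * hi) * (B + r2)"
    "A / 2 \<le> (1 - lo * hi) * (A + r1) + (1 + 2 * hi + lo * hi) * (B + r2)"
proof -
  define c where "c = 1 + 2 * hi + lo * hi"
  define d where "d = 1 - lo * hi"
  define G where "G = 1 + lo * hi"
  have G1: "G \<ge> 1" using lo by (simp add: G_def)
  have c0: "c \<ge> 0" using lo by (simp add: c_def)
  note aux = ineq_aux[OF lo E]
  have s1: "c + \<bar>d\<bar> \<le> 2 * (1 + lo) * (1 + hi)" using lo
    by (simp add: c_def d_def abs_if algebra_simps)
  have s4: "A + B \<le> (1 + hi) * A" using A by (simp add: algebra_simps)
  have err0: "\<bar>c * r1\<bar> + \<bar>d * r2\<bar> \<le> (c + \<bar>d\<bar>) * (\<epsilon> * (A + B))"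
    unfolding abs_mult using r c0 by (simp add: distrib_right mult_mono add_mono)
  have AB0: "0 \<le> A + B" using A lo by (smt (verit) mult_nonneg_nonneg)
  have e0: "0 \<le> \<epsilon> * (A + B)" using eps AB0 by simp
  have s10: "0 \<le> 2 * (1 + lo) * (1 + hi)" using lo by simp
  have "(c + \<bar>d\<bar>) * (\<epsilon> * (A + B)) \<le> (2 * (1 + lo) * (1 + hi)) * (\<epsilon> * ((1 + hi) * A))"
    using s1 s4 e0 eps AB0 s10 by (intro mult_mono) (auto intro: mult_left_mono)
  also have "\<dots> = 2 * \<epsilon> * A * ((1 + lo) * (1 + hi)) * (1 + hi)" by (simp add: algebra_simps)
  also have "\<dots> \<le> 2 * \<epsilon> * A * ((1 + E) * G) * (E * (1 + lo))"
  proof -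
    have "((1 + lo) * (1 + hi)) * (1 + hi) \<le> ((1 + E) * G) * (E * (1 + lo))"
    proof (rule mult_mono)
      show "(1 + lo) * (1 + hi) \<le> (1 + E) * G" using aux(1) unfolding G_def .
      show "1 + hi \<le> E * (1 + lo)" using aux(2) .
      show "0 \<le> (1 + E) * G" using E G1 by simp
      show "0 \<le> 1 + hi" using lo by simp
    qed
    moreover have "0 \<le> 2 * \<epsilon> * A" using eps A by simp
    ultimately have "2 * \<epsilon> * A * (((1 + lo) * (1 + hi)) * (1 + hi)) \<le> 2 * \<epsilon> * A * (((1 + E) * G) * (E * (1 + lo)))"
      by (rule mult_left_mono)
    then show ?thesis by (simp only: mult.assoc)
  qed
  also have "\<dots> \<le> 2 * \<epsilon> * A * ((2 * E) * G) * (E * (1 + lo))"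
  proof -
    have "(1 + E) * G \<le> (2 * E) * G" using E G1 by (intro mult_right_mono) auto
    moreover have "0 \<le> E * (1 + lo)" using E lo by simp
    ultimately have "((1 + E) * G) * (E * (1 + lo)) \<le> ((2 * E) * G) * (E * (1 + lo))"
      by (rule mult_right_mono)
    moreover have "0 \<le> 2 * \<epsilon> * A" using eps A by simp
    ultimately have "2 * \<epsilon> * A * (((1 + E) * G) * (E * (1 + lo))) \<le> 2 * \<epsilon> * A * (((2 * E) * G) * (E * (1 + lo)))"
      by (rule mult_left_mono)
    then show ?thesis by (simp only: mult.assoc)
  qed
  also have "\<dots> = (4 * \<epsilon> * E^2) * (G * (1 + lo) * A)" by (simp add: power2_eq_square algebra_simps)
  also have "\<dots> \<le> (1/4) * (G * (1 + lo) * A)"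
  proof (rule mult_right_mono)
    show "4 * \<epsilon> * E^2 \<le> 1/4" using eps by simp
    show "0 \<le> G * (1 + lo) * A" using G1 lo A by simp
  qed
  finally have errb: "(c + \<bar>d\<bar>) * (\<epsilon> * (A + B)) \<le> (1/4) * (G * (1 + lo) * A)" .
  have err: "\<bar>c * r1\<bar> + \<bar>d * r2\<bar> \<le> (1/4) * (G * (1 + lo) * A)" using err0 errb by linarith
  have big: "G * (1 + lo) * A \<ge> A" using G1 lo A
  proof -
    have "1 * 1 \<le> G * (1 + lo)" using G1 lo by (intro mult_mono) auto
    then show ?thesis using A by (metis mult_1 mult_right_mono mult_1_right)
  qed
  have mainp: "c * A - d * B \<ge> G * (1 + lo) * A"
  proof (cases "d \<ge> 0")
    case True
    then have "d * B \<le> d * (hi * A)" using A by (simp add: mult_left_mono)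
    moreover have "c - d * hi = (1 + hi) * G" by (simp add: c_def d_def G_def algebra_simps)
    moreover have "(1 + hi) * G * A \<ge> G * (1 + lo) * A" using lo G1 A by (simp add: mult_right_mono)
    ultimately show ?thesis by (simp add: algebra_simps)
  next
    case False
    then have "d * B \<le> d * (lo * A)" using A by (simp add: mult_left_mono_neg)
    moreover have "c * A = G * (1 + lo) * A + d * (lo * A) + 2 * ((hi - lo) * A)"
      by (simp add: c_def d_def G_def algebra_simps)
    moreover have "(hi - lo) * A \<ge> 0" using lo A by simp
    ultimately show ?thesis by linarith
  qed
  have mainq: "d * A + c * B \<ge> G * (1 + lo) * A"
  proof -
    have "c * B \<ge> c * (lo * A)" using A c0 by (simp add: mult_left_mono)
    moreover have "d * A + c * (lo * A) = G * (1 + lo) * A" by (simp add: c_def d_def G_def algebra_simps)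
    ultimately show ?thesis by linarith
  qed
  have q1: "\<bar>d * r2\<bar> \<le> \<bar>d\<bar> * (\<epsilon> * (A + B))" "\<bar>c * r1\<bar> \<le> c * (\<epsilon> * (A + B))"
    "\<bar>d * r1\<bar> \<le> \<bar>d\<bar> * (\<epsilon> * (A + B))" "\<bar>c * r2\<bar> \<le> c * (\<epsilon> * (A + B))"
    using r c0 unfolding abs_mult by (auto intro: mult_left_mono)
  have "c * (A + r1) - d * (B + r2) = (c * A - d * B) + (c * r1 - d * r2)" by (simp add: algebra_simps)
  moreover have "\<bar>c * r1 - d * r2\<bar> \<le> \<bar>c * r1\<bar> + \<bar>d * r2\<bar>" by (rule abs_triangle_ineq4)
  ultimately show "A / 2 \<le> (1 + 2 * hi + lo * hi) * (A + r1) - (1 - lo * hi) * (B + r2)"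
    using mainp err big unfolding c_def[symmetric] d_def[symmetric] by linarith
  have "d * (A + r1) + c * (B + r2) = (d * A + c * B) + (d * r1 + c * r2)" by (simp add: algebra_simps)
  moreover have "\<bar>d * r1 + c * r2\<bar> \<le> \<bar>d * r1\<bar> + \<bar>c * r2\<bar>" by (rule abs_triangle_ineq)
  moreover have "\<bar>d * r1\<bar> + \<bar>c * r2\<bar> \<le> (c + \<bar>d\<bar>) * (\<epsilon> * (A + B))" using q1 by (simp add: algebra_simps)
  ultimately show "A / 2 \<le> (1 - lo * hi) * (A + r1) + (1 + 2 * hi + lo * hi) * (B + r2)"
    using mainq errb big unfolding c_def[symmetric] d_def[symmetric] by linarith
qed


lemma Cbar_bounds:
  assumes cs: "cone_setting V S e m \<kappa>" and l: "l \<in> S"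
    and pb: "b - lo *\<^sub>R a \<in> Cbar S" and qb: "hi *\<^sub>R a - b \<in> Cbar S"
  shows "lo * l a \<le> l b" "l b \<le> hi * l a"
proof -
  have bll: "bounded_linear l" using cs_facts(1)[OF cs] l by auto
  have "0 \<le> l (b - lo *\<^sub>R a)" "0 \<le> l (hi *\<^sub>R a - b)" using pb qb l by (auto simp: Cbar_def)
  then show "lo * l a \<le> l b" "l b \<le> hi * l a" by (simp_all add: bl[OF bll])
qed

lemma image_mem:
  assumes cs: "cone_setting V S e m \<kappa>" and a: "a \<in> coneR S" and b: "b \<in> coneR S"
    and eps: "0 < \<epsilon>" "16 * \<epsilon> * E^2 < 1" and E: "1 \<le> E"
    and cX: "\<forall>l\<in>S. cmod (cext l X - complex_of_real (l a)) \<le> \<epsilon> * l a"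
    and cY: "\<forall>l\<in>S. cmod (cext l Y - complex_of_real (l b)) \<le> \<epsilon> * l b"
    and pb: "b - lo *\<^sub>R a \<in> Cbar S" and qb: "hi *\<^sub>R a - b \<in> Cbar S"
    and lo: "0 < lo" "lo \<le> hi" "hi \<le> E * lo"
  shows "X + cmult \<i> Y \<in> coneC S"
proof -
  note F = cs_facts[OF cs]
  obtain U1 U2 where U: "X + cmult \<i> Y = (U1, U2)" by (metis surj_pair)
  define c where "c = 1 + 2 * hi + lo * hi"
  define d where "d = 1 - lo * hi"
  have c0: "c \<noteq> 0" using lo unfolding c_def by (smt (verit) mult_nonneg_nonneg)
  have bnds: "1/2 * l a \<le> l (c *\<^sub>R U1 - d *\<^sub>R U2) \<and> 1/2 * l a \<le> l (d *\<^sub>R U1 + c *\<^sub>R U2)"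
    if l: "l \<in> S" for l
  proof -
    have bll: "bounded_linear l" using F(1) l by auto
    define A where "A = l a"
    define B where "B = l b"
    define d1 where "d1 = cext l X - complex_of_real A"
    define d2 where "d2 = cext l Y - complex_of_real B"
    have A0: "0 \<le> A" using a l by (simp add: A_def coneR_def)
    have AB: "lo * A \<le> B" "B \<le> hi * A" using Cbar_bounds[OF cs l pb qb] by (simp_all add: A_def B_def)
    have d1b: "cmod d1 \<le> \<epsilon> * A" using cX l by (simp add: d1_def A_def)
    have d2b: "cmod d2 \<le> \<epsilon> * B" using cY l by (simp add: d2_def B_def)
    have "cext l (U1, U2) = cext l X + \<i> * cext l Y"
      unfolding U[symmetric] cext_simps(1,2)[OF bll] ..
    then have lU: "l U1 = A + (Re d1 - Im d2)" "l U2 = B + (Im d1 + Re d2)"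
      by (simp_all add: cext_simps(3)[OF bll] d1_def d2_def complex_eq_iff)
    have r1: "\<bar>Re d1 - Im d2\<bar> \<le> \<epsilon> * (A + B)"
      using abs_Re_le_cmod[of d1] abs_Im_le_cmod[of d2] d1b d2b by (smt (verit) distrib_left)
    have r2: "\<bar>Im d1 + Re d2\<bar> \<le> \<epsilon> * (A + B)"
      using abs_Im_le_cmod[of d1] abs_Re_le_cmod[of d2] d1b d2b by (smt (verit) distrib_left)
    note I = ineq_pq[OF A0 AB lo E eps r1 r2]
    have "l (c *\<^sub>R U1 - d *\<^sub>R U2) = c * l U1 - d * l U2" by (simp add: bl[OF bll])
    moreover have "l (d *\<^sub>R U1 + c *\<^sub>R U2) = d * l U1 + c * l U2" by (simp add: bl[OF bll])
    ultimately show ?thesis using I unfolding lU c_def d_def A_def[symmetric] by simp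
  qed
  have "c *\<^sub>R U1 - d *\<^sub>R U2 \<in> coneR S"
    by (rule coneR_of_bound[OF cs a, of "1/2"]) (use bnds in auto)
  moreover have "d *\<^sub>R U1 + c *\<^sub>R U2 \<in> coneR S"
    by (rule coneR_of_bound[OF cs a, of "1/2"]) (use bnds in auto)
  ultimately have "(U1, U2) \<in> coneC S" using c0 by (intro coneC_intro) auto
  then show ?thesis using U by simp
qed


lemma disk_facts:
  fixes w :: complex
  assumes w: "cmod (w - complex_of_real ((lo + hi) / 2)) \<le> (hi - lo) / 2" and lo: "0 < lo" "lo \<le> hi"
  shows "cmod w \<le> hi" "lo \<le> cmod w" "(1 + lo * hi) / (1 + hi) \<le> cmod (1 + \<i> * w)"
proof -
  define c0 where "c0 = (lo + hi) / 2"
  define r0 where "r0 = (hi - lo) / 2"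
  have w': "cmod (w - complex_of_real c0) \<le> r0" using w by (simp add: c0_def r0_def)
  have c00: "c0 \<ge> 0" using lo by (simp add: c0_def)
  have nc: "cmod (complex_of_real c0) = c0" using c00 by simp
  have t1: "cmod w \<le> cmod (complex_of_real c0) + cmod (w - complex_of_real c0)"
    by (rule norm_triangle_sub)
  have "r0 + c0 = hi" by (simp add: c0_def r0_def field_simps)
  then show "cmod w \<le> hi" using t1 w' nc by linarith
  have t2: "cmod (complex_of_real c0) \<le> cmod w + cmod (complex_of_real c0 - w)"
    by (rule norm_triangle_sub)
  have t2': "cmod (complex_of_real c0 - w) = cmod (w - complex_of_real c0)" by (rule norm_minus_commute)
  have "c0 - r0 = lo" by (simp add: c0_def r0_def field_simps)
  then show "lo \<le> cmod w" using t2 t2' w' nc by linarith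
  define s where "s = cmod (complex_of_real c0 - \<i>)"
  have s2: "s^2 = c0^2 + 1" unfolding s_def cmod_def by simp
  have s0: "s \<ge> 0" by (simp add: s_def)
  have sle: "s \<le> c0 + 1"
  proof -
    have "s^2 \<le> (c0 + 1)^2" using s2 c00 by (simp add: power2_eq_square algebra_simps)
    then show ?thesis using s0 c00 by (simp add: power2_le_iff_abs_le)
  qed
  have one: "1 + \<i> * w = \<i> * (w - \<i>)" by (simp add: algebra_simps)
  have "cmod (1 + \<i> * w) = cmod (w - \<i>)" unfolding one by (simp add: norm_mult)
  moreover have "cmod (w - \<i>) \<ge> s - r0"
  proof -
    have eqn: "(complex_of_real c0 - \<i>) - (complex_of_real c0 - w) = w - \<i>" by simp
    have "s \<le> cmod (complex_of_real c0 - w) + cmod (w - \<i>)"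
      using norm_triangle_sub[of "complex_of_real c0 - \<i>" "complex_of_real c0 - w"] unfolding eqn s_def .
    then have "s \<le> cmod (w - complex_of_real c0) + cmod (w - \<i>)" unfolding t2' .
    then show ?thesis using w' by linarith
  qed
  moreover have "s - r0 \<ge> (1 + lo * hi) / (1 + hi)"
  proof -
    have sp: "s > 0"
    proof (rule ccontr)
      assume "\<not> s > 0" then have "s = 0" using s0 by simp
      moreover have "c0^2 + 1 > 0" by (simp add: add_nonneg_pos)
      ultimately show False using s2 by simp
    qed
    have "r0 \<ge> 0" using lo by (simp add: r0_def)
    then have pos: "s + r0 > 0" using sp by linarith
    have prod: "(s - r0) * (s + r0) = 1 + lo * hi"
      using s2 by (simp add: c0_def r0_def power2_eq_square algebra_simps field_simps)
    then have eq: "s - r0 = (1 + lo * hi) / (s + r0)" using pos by (simp add: field_simps)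
    have "c0 + r0 = hi" by (simp add: c0_def r0_def field_simps)
    then have le: "s + r0 \<le> 1 + hi" using sle by linarith
    have G0: "0 \<le> 1 + lo * hi" using lo by simp
    have "(1 + lo * hi) / (1 + hi) \<le> (1 + lo * hi) / (s + r0)"
      by (rule divide_left_mono[OF le G0]) (use pos lo in simp)
    then show ?thesis using eq by simp
  qed
  ultimately show "(1 + lo * hi) / (1 + hi) \<le> cmod (1 + \<i> * w)" by linarith
qed


lemma ratio_ineq:
  fixes lo hi lo0 hi0 E \<epsilon> :: real
  assumes lo: "0 < lo" "lo \<le> hi" "hi \<le> E * lo" and lo0: "0 < lo0" "lo0 \<le> hi0" "hi0 \<le> E * lo0"
    and E: "1 \<le> E" and eps: "0 < \<epsilon>" "16 * \<epsilon> * E^2 < 1"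
  shows "0 < 1 + lo * hi - 3 * \<epsilon> * (1 + hi)^2"
    "hi0 * (1 + 3 * \<epsilon>) * (1 + hi)^2 \<le> 4 * E^2 * (lo0 * (1 + lo * hi - 3 * \<epsilon> * (1 + hi)^2))"
proof -
  define G where "G = 1 + lo * hi"
  have G1: "G \<ge> 1" using lo by (simp add: G_def)
  have h1: "(1 + hi)^2 \<le> (1 + E) * G"
  proof -
    have id: "(1 + E) * (E + hi^2) - E * (1 + hi)^2 = (E - hi)^2" by (simp add: power2_eq_square algebra_simps)
    have "0 \<le> (E - hi)^2" by simp
    then have a1: "E * (1 + hi)^2 \<le> (1 + E) * (E + hi^2)" using id by linarith
    have "hi * hi \<le> (E * lo) * hi" using lo by (intro mult_right_mono) auto
    then have "E + hi^2 \<le> E * G" by (simp add: G_def power2_eq_square algebra_simps)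
    then have "(1 + E) * (E + hi^2) \<le> (1 + E) * (E * G)" using E by (intro mult_left_mono) auto
    then have "E * (1 + hi)^2 \<le> E * ((1 + E) * G)" using a1 by (simp add: algebra_simps)
    then show ?thesis using E by simp
  qed
  have h2: "(1 + hi)^2 \<le> 2 * E * G"
  proof -
    have "(1 + E) * G \<le> (2 * E) * G" using E G1 by (intro mult_right_mono) auto
    then show ?thesis using h1 by simp
  qed
  have E2: "1 \<le> E^2" using E by (simp add: one_le_power)
  have EE2: "E \<le> E^2" using E by (simp add: power2_eq_square)
  have eb: "\<epsilon> * E^2 < 1/16" using eps by simp
  have eE: "\<epsilon> * E \<le> 1/16"
  proof -
    have "\<epsilon> * E \<le> \<epsilon> * E^2" using EE2 eps by (intro mult_left_mono) auto
    then show ?thesis using eb by simp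
  qed
  have e1: "\<epsilon> \<le> 1/16"
  proof -
    have "\<epsilon> * 1 \<le> \<epsilon> * E^2" using E2 eps by (intro mult_left_mono) auto
    then show ?thesis using eb by simp
  qed
  have h3: "3 * \<epsilon> * (1 + hi)^2 \<le> 3/8 * G"
  proof -
    have "3 * \<epsilon> * (1 + hi)^2 \<le> 3 * \<epsilon> * (2 * E * G)" using h2 eps by simp
    also have "\<dots> = 6 * ((\<epsilon> * E) * G)" by simp
    also have "(\<epsilon> * E) * G \<le> (1/16) * G" using eE G1 by (intro mult_right_mono) auto
    finally show ?thesis by simp
  qed
  have "0 < G - 3 * \<epsilon> * (1 + hi)^2"
  proof -
    define X where "X = 3 * \<epsilon> * (1 + hi)^2"
    show ?thesis using h3 G1 unfolding X_def[symmetric] by linarith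
  qed
  then show "0 < 1 + lo * hi - 3 * \<epsilon> * (1 + hi)^2" unfolding G_def .
  have e3: "1 + 3 * \<epsilon> \<le> 19/16" using e1 by simp
  have m1: "hi0 * (1 + 3 * \<epsilon>) \<le> (E * lo0) * (19/16)"
    using lo0 e3 eps by (intro mult_mono) auto
  have m2: "(hi0 * (1 + 3 * \<epsilon>)) * (1 + hi)^2 \<le> ((E * lo0) * (19/16)) * (2 * E * G)"
  proof (rule mult_mono[OF m1 h2])
    show "0 \<le> E * lo0 * (19 / 16)" using E lo0 by simp
    show "0 \<le> (1 + hi)^2" by simp
  qed
  have "((E * lo0) * (19/16)) * (2 * E * G) = 4 * E^2 * (lo0 * ((19/32) * G))" by (simp add: power2_eq_square)
  also have "\<dots> \<le> 4 * E^2 * (lo0 * (G - 3 * \<epsilon> * (1 + hi)^2))"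
  proof -
    have "(19/32) * G \<le> G - 3 * \<epsilon> * (1 + hi)^2"
    proof -
      define X where "X = 3 * \<epsilon> * (1 + hi)^2"
      show ?thesis using h3 G1 unfolding X_def[symmetric] by linarith
    qed
    then have "lo0 * ((19/32) * G) \<le> lo0 * (G - 3 * \<epsilon> * (1 + hi)^2)" using lo0 by (intro mult_left_mono) auto
    then show ?thesis by (rule mult_left_mono) simp
  qed
  finally show "hi0 * (1 + 3 * \<epsilon>) * (1 + hi)^2 \<le> 4 * E^2 * (lo0 * (1 + lo * hi - 3 * \<epsilon> * (1 + hi)^2))"
    using m2 by (simp add: G_def)
qed



lemma image_bounds:
  assumes cs: "cone_setting V S e m \<kappa>" and f: "f \<in> dual_coneC S"
    and a: "a \<in> coneR S" and b: "b \<in> coneR S" and a0: "a0 \<in> coneR S"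
    and eps: "0 < \<epsilon>" "16 * \<epsilon> * E^2 < 1" and E: "1 \<le> E"
    and cX: "\<forall>l\<in>S. cmod (cext l X - complex_of_real (l a)) \<le> \<epsilon> * l a"
    and cY: "\<forall>l\<in>S. cmod (cext l Y - complex_of_real (l b)) \<le> \<epsilon> * l b"
    and pb: "b - lo *\<^sub>R a \<in> Cbar S" and qb: "hi *\<^sub>R a - b \<in> Cbar S"
    and lo: "0 < lo" "lo \<le> hi" "hi \<le> E * lo"
    and pb0: "a - lo0 *\<^sub>R a0 \<in> Cbar S" and qb0: "hi0 *\<^sub>R a0 - a \<in> Cbar S"
    and lo0: "0 < lo0" "lo0 \<le> hi0" "hi0 \<le> E * lo0"
  shows "lo0 * ((1 + lo * hi - 3 * \<epsilon> * (1 + hi)^2) / (1 + hi)) * cmod (f (a0, 0)) \<le> cmod (f (X + cmult \<i> Y))"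
    "cmod (f (X + cmult \<i> Y)) \<le> hi0 * ((1 + 3 * \<epsilon>) * (1 + hi)) * cmod (f (a0, 0))"
proof -
  have cf: "cbounded_functional f" using f by (simp add: dual_coneC_def)
  define fa where "fa = f (a, 0)"
  define fb where "fb = f (b, 0)"
  define fa0 where "fa0 = f (a0, 0)"
  define fX where "fX = f X"
  define fY where "fY = f Y"
  have fa_nz: "fa \<noteq> 0" unfolding fa_def using dual_nz[OF f coneR_coneC[OF a]] .
  have fsum: "f (X + cmult \<i> Y) = fX + \<i> * fY" unfolding fX_def fY_def cf_simps(4,5)[OF cf] ..
  have bX: "cmod (fX - fa) \<le> 3 * \<epsilon> * cmod fa" unfolding fX_def fa_def by (rule ball_lemma[OF cs f a eps(1) cX])
  have bY: "cmod (fY - fb) \<le> 3 * \<epsilon> * cmod fb" unfolding fY_def fb_def by (rule ball_lemma[OF cs f b eps(1) cY])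
  define w where "w = fb / fa"
  have hw: "cmod (w - complex_of_real ((lo + hi) / 2)) \<le> (hi - lo) / 2"
    unfolding w_def fa_def fb_def by (rule harnack[OF cs f a pb qb lo(1,2)])
  note dw = disk_facts[OF hw lo(1,2)]
  define v where "v = fa / fa0"
  have hv: "cmod (v - complex_of_real ((lo0 + hi0) / 2)) \<le> (hi0 - lo0) / 2"
    unfolding v_def fa_def fa0_def by (rule harnack[OF cs f a0 pb0 qb0 lo0(1,2)])
  note dv = disk_facts[OF hv lo0(1,2)]
  have fa0_nz: "fa0 \<noteq> 0" unfolding fa0_def using dual_nz[OF f coneR_coneC[OF a0]] .
  have fav: "cmod fa = cmod v * cmod fa0" using fa0_nz by (simp add: v_def norm_divide)
  have fbw: "cmod fb = cmod w * cmod fa" using fa_nz by (simp add: w_def norm_divide)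
  have fa_up: "cmod fa \<le> hi0 * cmod fa0" unfolding fav using dv(1) by (intro mult_right_mono) auto
  have fa_lo: "lo0 * cmod fa0 \<le> cmod fa" unfolding fav using dv(2) by (intro mult_right_mono) auto
  have fb_up: "cmod fb \<le> hi * cmod fa" unfolding fbw using dw(1) by (intro mult_right_mono) auto
  have e0: "0 \<le> \<epsilon>" using eps by simp
  have "cmod (fX + \<i> * fY) \<le> cmod fX + cmod fY"
    by (metis norm_ii norm_mult norm_triangle_ineq mult_1)
  moreover have "cmod fX \<le> (1 + 3 * \<epsilon>) * cmod fa"
  proof -
    have "cmod fX \<le> cmod fa + cmod (fX - fa)" by (rule norm_triangle_sub)
    then show ?thesis using bX by (simp add: algebra_simps)
  qed
  moreover have "cmod fY \<le> (1 + 3 * \<epsilon>) * cmod fb"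
  proof -
    have "cmod fY \<le> cmod fb + cmod (fY - fb)" by (rule norm_triangle_sub)
    then show ?thesis using bY by (simp add: algebra_simps)
  qed
  moreover have "(1 + 3 * \<epsilon>) * cmod fb \<le> (1 + 3 * \<epsilon>) * (hi * cmod fa)"
    using fb_up e0 by (intro mult_left_mono) auto
  ultimately have up1: "cmod (fX + \<i> * fY) \<le> ((1 + 3 * \<epsilon>) * (1 + hi)) * cmod fa"
    by (simp add: algebra_simps)
  have "((1 + 3 * \<epsilon>) * (1 + hi)) * cmod fa \<le> ((1 + 3 * \<epsilon>) * (1 + hi)) * (hi0 * cmod fa0)"
    using fa_up e0 lo by (intro mult_left_mono) auto
  with up1 show "cmod (f (X + cmult \<i> Y)) \<le> hi0 * ((1 + 3 * \<epsilon>) * (1 + hi)) * cmod (f (a0, 0))"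
    unfolding fsum fa0_def[symmetric] by (simp add: algebra_simps)
  define G where "G = 1 + lo * hi"
  define Q where "Q = (G - 3 * \<epsilon> * (1 + hi)^2) / (1 + hi)"
  have Qpos: "Q > 0"
    using ratio_ineq(1)[OF lo lo0 E eps] lo unfolding Q_def G_def by simp
  have Qeq: "Q = G / (1 + hi) - 3 * \<epsilon> * (1 + hi)" using lo unfolding Q_def
    by (simp add: field_simps power2_eq_square)
  have dec: "fX + \<i> * fY = fa * (1 + \<i> * w) + ((fX - fa) + \<i> * (fY - fb))"
    using fa_nz by (simp add: w_def field_simps)
  have t: "cmod (fa * (1 + \<i> * w)) \<le> cmod (fX + \<i> * fY) + cmod ((fX - fa) + \<i> * (fY - fb))"
    unfolding dec using norm_triangle_ineq4[of "fa * (1 + \<i> * w) + ((fX - fa) + \<i> * (fY - fb))" "(fX - fa) + \<i> * (fY - fb)"]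
    by simp
  have t2: "cmod ((fX - fa) + \<i> * (fY - fb)) \<le> 3 * \<epsilon> * cmod fa + 3 * \<epsilon> * cmod fb"
  proof -
    have "cmod ((fX - fa) + \<i> * (fY - fb)) \<le> cmod (fX - fa) + cmod (fY - fb)"
      by (metis norm_ii norm_mult norm_triangle_ineq mult_1)
    then show ?thesis using bX bY by linarith
  qed
  have t3: "3 * \<epsilon> * cmod fb \<le> 3 * \<epsilon> * (hi * cmod fa)" using fb_up e0 by (intro mult_left_mono) auto
  have t4: "cmod fa * (G / (1 + hi)) \<le> cmod (fa * (1 + \<i> * w))"
    unfolding norm_mult using dw(3) unfolding G_def by (intro mult_left_mono) auto
  have low1: "cmod fa * Q \<le> cmod (fX + \<i> * fY)"
  proof -
    have "cmod fa * Q = cmod fa * (G / (1 + hi)) - (3 * \<epsilon> * cmod fa + 3 * \<epsilon> * (hi * cmod fa))"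
      unfolding Qeq by (simp add: algebra_simps)
    then show ?thesis using t t2 t3 t4 by linarith
  qed
  have "lo0 * cmod fa0 * Q \<le> cmod fa * Q" using fa_lo Qpos by (intro mult_right_mono) auto
  with low1 show "lo0 * ((1 + lo * hi - 3 * \<epsilon> * (1 + hi)^2) / (1 + hi)) * cmod (f (a0, 0)) \<le> cmod (f (X + cmult \<i> Y))"
    unfolding fsum fa0_def[symmetric] Q_def G_def by (simp add: algebra_simps)
qed


lemma cnorm_ge:
  fixes x y :: "'a::real_normed_vector"
  shows "norm x + norm y \<le> 2 * cnorm (x, y)"
proof -
  define g where "g = (\<lambda>\<theta>. sqrt ((norm (fst (cmult (cis \<theta>) (x, y))))\<^sup>2 + (norm (snd (cmult (cis \<theta>) (x, y))))\<^sup>2))"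
  have bnd: "g \<theta> \<le> 2 * (norm x + norm y)" for \<theta>
  proof -
    have c1: "\<bar>cos \<theta>\<bar> \<le> 1" "\<bar>sin \<theta>\<bar> \<le> 1" by auto
    have n1: "norm (fst (cmult (cis \<theta>) (x, y))) \<le> norm x + norm y"
    proof -
      have "norm (fst (cmult (cis \<theta>) (x, y))) = norm (cos \<theta> *\<^sub>R x - sin \<theta> *\<^sub>R y)" by (simp add: cmult_def)
      also have "\<dots> \<le> norm (cos \<theta> *\<^sub>R x) + norm (sin \<theta> *\<^sub>R y)" by (rule norm_triangle_ineq4)
      also have "\<dots> \<le> norm x + norm y" using c1
        by (simp add: add_mono mult_left_le_one_le)
      finally show ?thesis .
    qed
    have n2: "norm (snd (cmult (cis \<theta>) (x, y))) \<le> norm x + norm y"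
    proof -
      have "norm (snd (cmult (cis \<theta>) (x, y))) = norm (sin \<theta> *\<^sub>R x + cos \<theta> *\<^sub>R y)" by (simp add: cmult_def)
      also have "\<dots> \<le> norm (sin \<theta> *\<^sub>R x) + norm (cos \<theta> *\<^sub>R y)" by (rule norm_triangle_ineq)
      also have "\<dots> \<le> norm x + norm y" using c1
        by (simp add: add_mono mult_left_le_one_le)
      finally show ?thesis .
    qed
    define p where "p = norm (fst (cmult (cis \<theta>) (x, y)))"
    define q where "q = norm (snd (cmult (cis \<theta>) (x, y)))"
    have "g \<theta> = sqrt (p^2 + q^2)" by (simp add: g_def p_def q_def)
    also have "\<dots> \<le> sqrt ((p + q)^2)"
      by (rule real_sqrt_le_mono) (simp add: p_def q_def power2_eq_square algebra_simps)
    also have "\<dots> = p + q" by (simp add: p_def q_def)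
    also have "\<dots> \<le> 2 * (norm x + norm y)" using n1 n2 unfolding p_def q_def by simp
    finally show ?thesis .
  qed
  have bdd: "bdd_above (range g)" using bnd by (intro bdd_aboveI[of _ "2 * (norm x + norm y)"]) auto
  have "g 0 \<le> cnorm (x, y)" unfolding cnorm_def g_def[symmetric] by (rule cSUP_upper[OF _ bdd]) simp
  moreover have "g 0 = sqrt ((norm x)^2 + (norm y)^2)" by (simp add: g_def cmult_def)
  moreover have "norm x \<le> sqrt ((norm x)^2 + (norm y)^2)" "norm y \<le> sqrt ((norm x)^2 + (norm y)^2)"
    by (simp_all add: real_le_rsqrt)
  ultimately show ?thesis by linarith
qed

lemma cext_dual:
  assumes cs: "cone_setting V S e m \<kappa>"
  shows "cext m \<in> dual_coneC S"
proof -
  note F = cs_facts[OF cs]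
  obtain K where K: "K > 0" "\<forall>x. norm (m x) \<le> norm x * K"
    using bounded_linear.pos_bounded[OF F(2)] by blast
  have cb: "cbounded_functional (cext m)"
    unfolding cbounded_functional_def
  proof (intro conjI allI)
    fix u v show "cext m (u + v) = cext m u + cext m v" by (rule cext_simps(1)[OF F(2)])
  next
    fix z v show "cext m (cmult z v) = z * cext m v" by (rule cext_simps(2)[OF F(2)])
  next
    show "\<exists>K'. \<forall>v. cmod (cext m v) \<le> K' * cnorm v"
    proof (intro exI allI)
      fix v :: "'a \<times> 'a"
      obtain x y where v: "v = (x, y)" by (metis surj_pair)
      have "cmod (cext m v) \<le> \<bar>m x\<bar> + \<bar>m y\<bar>" using cmod_le[of "cext m v"] by (simp add: v cext_def)
      also have "\<dots> \<le> K * (norm x + norm y)" using K(2)[rule_format, of x] K(2)[rule_format, of y]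
        by (simp add: algebra_simps)
      also have "\<dots> \<le> K * (2 * cnorm v)" unfolding v using cnorm_ge[of x y] K(1) by simp
      finally show "cmod (cext m v) \<le> (2 * K) * cnorm v" by simp
    qed
  qed
  have nz: "cext m h \<noteq> 0" if h: "h \<in> coneC S" for h
  proof -
    obtain z x y where zxy: "h = cmult z (x, y)" "z \<noteq> 0" "x \<in> coneR S" "y \<in> coneR S"
      using h unfolding coneC_def by blast
    have "m x \<ge> \<kappa> * norm x" using F(3) zxy(3) by auto
    moreover have "\<kappa> * norm x > 0" using F(4) zxy(3) by (simp add: coneR_def)
    ultimately have mx: "m x \<noteq> 0" by simp
    have "cext m h = z * Complex (m x) (m y)" using zxy(1) by (simp add: cext_simps(2,3)[OF F(2)])
    moreover have "Complex (m x) (m y) \<noteq> 0" using mx by (simp add: complex_eq_iff)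
    ultimately show ?thesis using zxy(2) by simp
  qed
  show ?thesis using cb nz by (simp add: dual_coneC_def)
qed


lemma delta_bound:
  fixes S :: "('b::real_normed_vector \<Rightarrow> real) set"
  assumes f0: "f0 \<in> dual_coneC S"
    and rpos: "\<forall>f\<in>dual_coneC S. 0 < cmod (f r)"
    and h1: "0 < p1" and hb: "\<forall>f\<in>dual_coneC S. p1 * cmod (f r) \<le> cmod (f h) \<and> cmod (f h) \<le> p2 * cmod (f r)"
    and g1: "0 < q1" and gb: "\<forall>f\<in>dual_coneC S. q1 * cmod (f r) \<le> cmod (f g) \<and> cmod (f g) \<le> q2 * cmod (f r)"
    and R: "p2 \<le> R * p1" "q2 \<le> R * q1"
  shows "delta_C S h g \<le> ereal (2 * ln R)"
proof -
  have t0: "0 < cmod (f0 r)" using rpos f0 by blast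
  have p12: "p1 \<le> p2"
  proof -
    have "p1 * cmod (f0 r) \<le> p2 * cmod (f0 r)" using hb f0 by fastforce
    then show ?thesis using t0 by simp
  qed
  have q12: "q1 \<le> q2"
  proof -
    have "q1 * cmod (f0 r) \<le> q2 * cmod (f0 r)" using gb f0 by fastforce
    then show ?thesis using t0 by simp
  qed
  have Rpos: "0 < R"
  proof (rule ccontr)
    assume "\<not> 0 < R"
    then have "R * p1 \<le> 0" using h1 by (simp add: mult_nonpos_nonneg)
    then show False using R(1) p12 h1 by linarith
  qed
  define lo where "lo = p1 / q2"
  define up where "up = p2 / q1"
  have lo0: "0 < lo" using h1 g1 q12 by (simp add: lo_def)
  define Es where "Es = E_set S h g"
  define M where "M = (\<lambda>z. ereal (cmod z)) ` Es"
  have Ene: "Es \<noteq> {}" using f0 unfolding Es_def E_set_def by blast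
  have zb: "lo \<le> cmod z \<and> cmod z \<le> up" if z: "z \<in> Es" for z
  proof -
    obtain f where f: "f \<in> dual_coneC S" "z = f h / f g" using z unfolding Es_def E_set_def by blast
    define t where "t = cmod (f r)"
    have t: "0 < t" using rpos f(1) by (simp add: t_def)
    have H: "p1 * t \<le> cmod (f h)" "cmod (f h) \<le> p2 * t" using hb f(1) by (auto simp: t_def)
    have Gg: "q1 * t \<le> cmod (f g)" "cmod (f g) \<le> q2 * t" using gb f(1) by (auto simp: t_def)
    have fg: "0 < cmod (f g)" using Gg(1) g1 t by (smt (verit) mult_pos_pos)
    have zc: "cmod z = cmod (f h) / cmod (f g)" by (simp add: f(2) norm_divide)
    have "(p1 * t) / (q2 * t) \<le> cmod (f h) / cmod (f g)"
      by (rule frac_le) (use H Gg fg h1 t in \<open>auto intro: mult_nonneg_nonneg\<close>)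
    moreover have "(p1 * t) / (q2 * t) = lo" using t by (simp add: lo_def)
    moreover have "cmod (f h) / cmod (f g) \<le> (p2 * t) / (q1 * t)"
      by (rule frac_le) (use H Gg fg h1 g1 p12 t in \<open>auto intro: mult_nonneg_nonneg\<close>)
    moreover have "(p2 * t) / (q1 * t) = up" using t by (simp add: up_def)
    ultimately show ?thesis using zc by simp
  qed
  have supb: "Sup M \<le> ereal up" unfolding M_def using zb by (auto intro!: Sup_least)
  have infb: "ereal lo \<le> Inf M" unfolding M_def using zb by (auto intro!: Inf_greatest)
  have Mne: "M \<noteq> {}" using Ene by (simp add: M_def)
  have infsup: "Inf M \<le> Sup M" using Mne by (simp add: Inf_le_Sup)
  obtain sr where sr: "Sup M = ereal sr" using supb infb infsup lo0
    by (cases "Sup M") auto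
  obtain ir where ir: "Inf M = ereal ir" using supb infb infsup lo0
    by (cases "Inf M") auto
  have ineqs: "lo \<le> ir" "ir \<le> sr" "sr \<le> up" using supb infb infsup sr ir by auto
  have dC: "delta_C S h g = ereal (ln (sr / ir))"
    using Ene sr ir ineqs lo0 unfolding delta_C_def Es_def[symmetric] M_def[symmetric]
    by (auto simp: Let_def)
  have "sr / ir \<le> up / lo" using ineqs lo0 by (intro frac_le) auto
  also have "up / lo = (p2 / p1) * (q2 / q1)" by (simp add: up_def lo_def field_simps)
  also have "\<dots> \<le> R * R"
  proof (rule mult_mono)
    show "p2 / p1 \<le> R" using R(1) h1 by (simp add: field_simps)
    show "q2 / q1 \<le> R" using R(2) g1 by (simp add: field_simps)
    show "0 \<le> R" using Rpos by simp
    show "0 \<le> q2 / q1" using g1 q12 by simp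
  qed
  finally have "sr / ir \<le> R * R" .
  then have "ln (sr / ir) \<le> ln (R * R)" using ineqs lo0 Rpos by (subst ln_le_cancel_iff) auto
  also have "ln (R * R) = 2 * ln R" using Rpos by (simp add: ln_mult)
  finally show ?thesis using dC by simp
qed

theorem theorem5p17:
  fixes V1 :: "'a::banach set" and S1 :: "('a \<Rightarrow> real) set" and e1 :: 'a and m1 :: "'a \<Rightarrow> real"
    and V2 :: "'b::banach set" and S2 :: "('b \<Rightarrow> real) set" and e2 :: 'b and m2 :: "'b \<Rightarrow> real"
    and \<kappa> :: real and L :: "'a \<Rightarrow> 'b" and LC :: "'a \<times> 'a \<Rightarrow> 'b \<times> 'b" and \<epsilon> :: real
  assumes set1: "cone_setting V1 S1 e1 m1 \<kappa>"
    and set2: "cone_setting V2 S2 e2 m2 \<kappa>"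
    and L_lin: "bounded_linear L"
    and LC_lin: "cbounded_linear LC"
    and L_cone: "L ` coneR S1 \<subseteq> coneR S2"
    and Delta_fin: "diam_H S2 (L ` coneR S1) < \<infinity>"
    and eps_pos: "0 < \<epsilon>"
    and eps_small: "\<epsilon> < \<kappa>\<^sup>2 / (12 * sqrt 2) * exp (- 2 * real_of_ereal (diam_H S2 (L ` coneR S1)))"
    and close: "\<forall>l\<in>S2. \<forall>h\<in>coneR S1.
                 cmod (cext l (LC (h, 0)) - complex_of_real (l (L h))) \<le> \<epsilon> * l (L h)"
  shows "LC ` coneC S1 \<subseteq> coneC S2 \<and>
         diam_C S2 (LC ` coneC S1)
           \<le> ereal (8 * real_of_ereal (diam_H S2 (L ` coneR S1))
                     + 2 * ln (3 * sqrt 2 * \<kappa> powr (-2))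
                     + sqrt 2 / 3 * \<kappa>\<^sup>2 * exp (- 2 * real_of_ereal (diam_H S2 (L ` coneR S1))))"
proof -
  note F1 = cs_facts[OF set1]
  note F2 = cs_facts[OF set2]
  define A where "A = L ` coneR S1"
  define DH where "DH = diam_H S2 A"
  define \<Delta> where "\<Delta> = real_of_ereal DH"
  have AS2: "A \<subseteq> coneR S2" using L_cone by (simp add: A_def)
  define a0 where "a0 = L e1"
  have a0A: "a0 \<in> A" using F1(6) by (simp add: A_def a0_def)
  have a0C: "a0 \<in> coneR S2" using a0A AS2 by auto
  have hd_le: "hilbert_dist S2 a b \<le> DH" if "a \<in> A" "b \<in> A" for a b
    unfolding DH_def diam_H_def using that by (auto intro: Sup_upper)
  have DHf: "DH < \<infinity>" using Delta_fin by (simp add: DH_def A_def)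
  have hd_ninf: "hilbert_dist S2 a0 a0 \<noteq> -\<infinity>" by (simp add: hilbert_dist_def Let_def)
  have DHe: "DH = ereal \<Delta>"
  proof -
    have "DH \<noteq> -\<infinity>" using hd_le[OF a0A a0A] hd_ninf by auto
    then show ?thesis using DHf unfolding \<Delta>_def by (cases DH) auto
  qed
  have hb: "\<exists>lo hi. 0 < lo \<and> lo \<le> hi \<and> hi \<le> exp \<Delta> * lo \<and> b - lo *\<^sub>R a \<in> Cbar S2 \<and> hi *\<^sub>R a - b \<in> Cbar S2"
    if "a \<in> A" "b \<in> A" for a b
    using hilbert_bounds[OF set2, of a b \<Delta>] that AS2 hd_le[OF that] DHe by auto
  define E where "E = exp \<Delta>"
  have E1: "1 \<le> E"
  proof -
    obtain lo hi where "0 < lo" "lo \<le> hi" "hi \<le> exp \<Delta> * lo" using hb[OF a0A a0A] by blast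
    then have "1 * lo \<le> exp \<Delta> * lo" by linarith
    then have "1 \<le> exp \<Delta>" using \<open>0 < lo\<close> by (rule mult_right_le_imp_le)
    then show ?thesis by (simp add: E_def)
  qed
  have D0: "0 \<le> \<Delta>" using E1 unfolding E_def by simp
  have E2: "E^2 = exp (2 * \<Delta>)" by (simp add: E_def power2_eq_square exp_add[symmetric])
  have epsE: "16 * \<epsilon> * E^2 < 1"
  proof -
    have s2: "4/3 \<le> sqrt 2" by (rule real_le_rsqrt) (simp add: power2_eq_square)
    have k2: "\<kappa>^2 < 1"
    proof -
      have "\<kappa> * \<kappa> < 1 * 1" using F2(4,5) by (intro mult_strict_mono) auto
      then show ?thesis by (simp add: power2_eq_square)
    qed
    have "\<epsilon> * E^2 < (\<kappa>\<^sup>2 / (12 * sqrt 2) * exp (- 2 * \<Delta>)) * exp (2 * \<Delta>)"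
    proof -
      have "\<epsilon> < \<kappa>\<^sup>2 / (12 * sqrt 2) * exp (- 2 * \<Delta>)"
        using eps_small unfolding \<Delta>_def DH_def A_def .
      then show ?thesis unfolding E2 by (rule mult_strict_right_mono) simp
    qed
    also have "\<dots> = \<kappa>\<^sup>2 / (12 * sqrt 2)" by (simp add: exp_add[symmetric])
    also have "\<dots> \<le> 1 / 16"
    proof -
      have "\<kappa>\<^sup>2 * 16 \<le> 1 * (12 * sqrt 2)" using k2 s2 by simp
      then show ?thesis by (simp add: field_simps)
    qed
    finally show ?thesis by simp
  qed
  have LCl: "\<And>x y. LC (x, y) = LC (x, 0) + cmult \<i> (LC (y, 0))" "\<And>z v. LC (cmult z v) = cmult z (LC v)"
    using LC_split[OF LC_lin] by blast+
  have key: "u \<in> coneC S2 \<and> (\<exists>p1 p2. 0 < p1 \<and> p2 \<le> (4 * E^2) * p1 \<and>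
      (\<forall>f\<in>dual_coneC S2. p1 * cmod (f (a0, 0)) \<le> cmod (f u) \<and> cmod (f u) \<le> p2 * cmod (f (a0, 0))))"
    if u: "u \<in> LC ` coneC S1" for u
  proof -
    obtain v where v: "v \<in> coneC S1" "u = LC v" using u by blast
    obtain z x y where zxy: "v = cmult z (x, y)" "z \<noteq> 0" "x \<in> coneR S1" "y \<in> coneR S1"
      using v(1) unfolding coneC_def by blast
    define X where "X = LC (x, 0)"
    define Y where "Y = LC (y, 0)"
    define a where "a = L x"
    define b where "b = L y"
    have aA: "a \<in> A" "b \<in> A" using zxy by (auto simp: a_def b_def A_def)
    have aC: "a \<in> coneR S2" "b \<in> coneR S2" using aA AS2 by auto
    have uXY: "u = cmult z (X + cmult \<i> Y)"
      unfolding v(2) zxy(1) LCl(2)[of z "(x, y)"] LCl(1)[of x y] X_def Y_def ..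
    have cX: "\<forall>l\<in>S2. cmod (cext l X - complex_of_real (l a)) \<le> \<epsilon> * l a"
      using close zxy(3) by (simp add: X_def a_def)
    have cY: "\<forall>l\<in>S2. cmod (cext l Y - complex_of_real (l b)) \<le> \<epsilon> * l b"
      using close zxy(4) by (simp add: Y_def b_def)
    obtain lo hi where lh: "0 < lo" "lo \<le> hi" "hi \<le> E * lo" "b - lo *\<^sub>R a \<in> Cbar S2" "hi *\<^sub>R a - b \<in> Cbar S2"
      using hb[OF aA] unfolding E_def by blast
    obtain lo0 hi0 where lh0: "0 < lo0" "lo0 \<le> hi0" "hi0 \<le> E * lo0" "a - lo0 *\<^sub>R a0 \<in> Cbar S2" "hi0 *\<^sub>R a0 - a \<in> Cbar S2"
      using hb[OF a0A aA(1)] unfolding E_def by blast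
    have mem: "X + cmult \<i> Y \<in> coneC S2"
      by (rule image_mem[OF set2 aC eps_pos epsE E1 cX cY lh(4,5) lh(1,2,3)])
    have umem: "u \<in> coneC S2" using coneC_cmult[OF mem zxy(2)] uXY by simp
    define Q where "Q = (1 + lo * hi - 3 * \<epsilon> * (1 + hi)^2) / (1 + hi)"
    have hi0': "0 < 1 + hi" using lh by simp
    have Qpos: "0 < Q" using ratio_ineq(1)[OF lh(1,2,3) lh0(1,2,3) E1 eps_pos epsE] hi0' by (simp add: Q_def)
    have rat: "hi0 * ((1 + 3 * \<epsilon>) * (1 + hi)) \<le> 4 * E^2 * (lo0 * Q)"
    proof -
      have r: "hi0 * (1 + 3 * \<epsilon>) * (1 + hi)^2 \<le> 4 * E^2 * (lo0 * (1 + lo * hi - 3 * \<epsilon> * (1 + hi)^2))"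
        by (rule ratio_ineq(2)[OF lh(1,2,3) lh0(1,2,3) E1 eps_pos epsE])
      have "hi0 * ((1 + 3 * \<epsilon>) * (1 + hi)) = (hi0 * (1 + 3 * \<epsilon>) * (1 + hi)^2) / (1 + hi)"
        using hi0' by (simp add: power2_eq_square field_simps)
      also have "\<dots> \<le> (4 * E^2 * (lo0 * (1 + lo * hi - 3 * \<epsilon> * (1 + hi)^2))) / (1 + hi)"
        using r hi0' by (simp add: divide_right_mono)
      also have "\<dots> = 4 * E^2 * (lo0 * Q)" by (simp add: Q_def)
      finally show ?thesis .
    qed
    define p1 where "p1 = cmod z * (lo0 * Q)"
    define p2 where "p2 = cmod z * (hi0 * ((1 + 3 * \<epsilon>) * (1 + hi)))"
    have p1: "0 < p1" using zxy(2) lh0(1) Qpos by (simp add: p1_def)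
    have p12: "p2 \<le> (4 * E^2) * p1"
      using rat zxy(2) unfolding p1_def p2_def by (simp add: mult.left_commute)
    have fb: "p1 * cmod (f (a0, 0)) \<le> cmod (f u) \<and> cmod (f u) \<le> p2 * cmod (f (a0, 0))"
      if f: "f \<in> dual_coneC S2" for f
    proof -
      have cf: "cbounded_functional f" using f by (simp add: dual_coneC_def)
      note IB = image_bounds[OF set2 f aC a0C eps_pos epsE E1 cX cY lh(4,5) lh(1,2,3) lh0(4,5) lh0(1,2,3)]
      have fu: "cmod (f u) = cmod z * cmod (f (X + cmult \<i> Y))"
        unfolding uXY cf_simps(5)[OF cf] norm_mult ..
      have "p1 * cmod (f (a0, 0)) = cmod z * (lo0 * Q * cmod (f (a0, 0)))" by (simp add: p1_def)
      also have "\<dots> \<le> cmod z * cmod (f (X + cmult \<i> Y))" using IB(1) by (intro mult_left_mono) (auto simp: Q_def)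
      finally have A1: "p1 * cmod (f (a0, 0)) \<le> cmod (f u)" using fu by simp
      have "cmod z * cmod (f (X + cmult \<i> Y)) \<le> cmod z * (hi0 * ((1 + 3 * \<epsilon>) * (1 + hi)) * cmod (f (a0, 0)))"
        using IB(2) by (intro mult_left_mono) auto
      also have "\<dots> = p2 * cmod (f (a0, 0))" by (simp add: p2_def)
      finally have A2: "cmod (f u) \<le> p2 * cmod (f (a0, 0))" using fu by simp
      show ?thesis using A1 A2 by simp
    qed
    show ?thesis using umem p1 p12 fb by blast
  qed
  have part1: "LC ` coneC S1 \<subseteq> coneC S2" using key by blast
  have f0: "cext m2 \<in> dual_coneC S2" by (rule cext_dual[OF set2])
  have rpos: "\<forall>f\<in>dual_coneC S2. 0 < cmod (f (a0, 0))"
    using dual_nz coneR_coneC[OF a0C] by auto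
  define R where "R = 4 * E^2"
  have dpair: "delta_C S2 h g \<le> ereal (2 * ln R)" if hg: "h \<in> LC ` coneC S1" "g \<in> LC ` coneC S1" for h g
  proof -
    obtain p1 p2 where P: "0 < p1" "p2 \<le> R * p1"
      "\<forall>f\<in>dual_coneC S2. p1 * cmod (f (a0, 0)) \<le> cmod (f h) \<and> cmod (f h) \<le> p2 * cmod (f (a0, 0))"
      using key[OF hg(1)] unfolding R_def by blast
    obtain q1 q2 where Q: "0 < q1" "q2 \<le> R * q1"
      "\<forall>f\<in>dual_coneC S2. q1 * cmod (f (a0, 0)) \<le> cmod (f g) \<and> cmod (f g) \<le> q2 * cmod (f (a0, 0))"
      using key[OF hg(2)] unfolding R_def by blast
    show ?thesis by (rule delta_bound[OF f0 rpos P(1) P(3) Q(1) Q(3) P(2) Q(2)])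
  qed
  have diam: "diam_C S2 (LC ` coneC S1) \<le> ereal (2 * ln R)"
    unfolding diam_C_def
  proof (rule Sup_least)
    fix t assume "t \<in> {delta_C S2 h g |h g. h \<in> LC ` coneC S1 \<and> g \<in> LC ` coneC S1}"
    then obtain h g where "t = delta_C S2 h g" "h \<in> LC ` coneC S1" "g \<in> LC ` coneC S1" by blast
    then show "t \<le> ereal (2 * ln R)" using dpair by blast
  qed
  have lnR: "2 * ln R = 2 * ln 4 + 4 * \<Delta>"
  proof -
    have "ln R = ln 4 + ln (E^2)" by (simp add: R_def ln_mult E_def)
    also have "ln (E^2) = 2 * \<Delta>" using E2 by simp
    finally show ?thesis by simp
  qed
  have fin: "2 * ln R \<le> 8 * \<Delta> + 2 * ln (3 * sqrt 2 * \<kappa> powr (-2)) + sqrt 2 / 3 * \<kappa>\<^sup>2 * exp (- 2 * \<Delta>)"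
  proof -
    have s2: "4/3 \<le> sqrt 2" by (rule real_le_rsqrt) (simp add: power2_eq_square)
    have kp: "1 \<le> \<kappa> powr (-2)"
    proof -
      have "\<kappa> powr 2 \<le> 1" using F2(4,5) by (intro powr_le1) auto
      moreover have "0 < \<kappa> powr 2" using F2(4) by simp
      ultimately show ?thesis by (simp add: powr_minus_divide)
    qed
    have "4 \<le> 3 * sqrt 2" using s2 by simp
    also have "\<dots> \<le> 3 * sqrt 2 * \<kappa> powr (-2)" using kp by simp
    finally have l4: "ln 4 \<le> ln (3 * sqrt 2 * \<kappa> powr (-2))" by simp
    have "0 \<le> sqrt 2 / 3 * \<kappa>\<^sup>2 * exp (- 2 * \<Delta>)" by simp
    then show ?thesis using lnR l4 D0 by linarith
  qed
  have fin': "diam_C S2 (LC ` coneC S1) \<le> ereal (8 * \<Delta> + 2 * ln (3 * sqrt 2 * \<kappa> powr (-2)) + sqrt 2 / 3 * \<kappa>\<^sup>2 * exp (- 2 * \<Delta>))"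
    using order_trans[OF diam] fin by simp
  show ?thesis using part1 fin' unfolding \<Delta>_def DH_def A_def by blast
qed

end
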